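(* Let $a\in \mathcal{A}$ and $n\in \mathbb{N}$. Then $a$ has a generalized core-EP inverse if and only if (1) $a\in \mathcal{A}^d$; and (2) there exists a projection $p\in \mathcal{A}$ such that $pa=pap\in \mathcal{A}^{qnil}$ and $a^n+p\in \mathcal{A}^{-1}$.
   Context: $\mathcal{A}$ is a complex Banach *-algebra with identity; $\mathcal{A}^d$ is the set of generalized Drazin invertible elements, $\mathcal{A}^{qnil}$ the quasinilpotents, $\mathcal{A}^{-1}$ the invertible elements; a projection is $p=p^2=p^*$. The generalized core-EP inverse of $a$ is the unique $x$ with $ax^2=x$, $(ax)^*=ax$, $\lim_{n\to\infty}\|a^n-xa^{n+1}\|^{1/n}=0$. *)

theory Defs
  imports "HOL-Analysis.Analysis"
begin

class complex_banach_star_algebra = real_normed_algebra_1 + banach +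
  fixes cscale :: "complex \<Rightarrow> 'a \<Rightarrow> 'a"
    and invol :: "'a \<Rightarrow> 'a"
  assumes cscale_add_right: "cscale c (x + y) = cscale c x + cscale c y"
    and cscale_add_left: "cscale (c + d) x = cscale c x + cscale d x"
    and cscale_cscale: "cscale c (cscale d x) = cscale (c * d) x"
    and cscale_of_real: "cscale (complex_of_real r) x = scaleR r x"
    and norm_cscale: "norm (cscale c x) = cmod c * norm x"
    and cscale_left_mult: "cscale c x * y = cscale c (x * y)"
    and cscale_right_mult: "x * cscale c y = cscale c (x * y)"
    and invol_invol: "invol (invol x) = x"
    and invol_add: "invol (x + y) = invol x + invol y"
    and invol_cscale: "invol (cscale c x) = cscale (cnj c) (invol x)"
    and invol_mult: "invol (x * y) = invol y * invol x"

definition invertible_el :: "'a::complex_banach_star_algebra \<Rightarrow> bool" where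
  "invertible_el a \<longleftrightarrow> (\<exists>b. a * b = 1 \<and> b * a = 1)"

definition projection :: "'a::complex_banach_star_algebra \<Rightarrow> bool" where
  "projection p \<longleftrightarrow> p * p = p \<and> invol p = p"

definition quasinilpotent :: "'a::complex_banach_star_algebra \<Rightarrow> bool" where
  "quasinilpotent a \<longleftrightarrow> (\<forall>z::complex. z \<noteq> 0 \<longrightarrow> invertible_el (cscale z 1 - a))"

definition gd_invertible :: "'a::complex_banach_star_algebra \<Rightarrow> bool" where
  "gd_invertible a \<longleftrightarrow>
     (\<exists>x. x * a * x = x \<and> a * x = x * a \<and> quasinilpotent (a - a * a * x))"

definition is_gcore_EP_inverse :: "'a::complex_banach_star_algebra \<Rightarrow> 'a \<Rightarrow> bool" where
  "is_gcore_EP_inverse a x \<longleftrightarrow>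
     a * x ^ 2 = x \<and> invol (a * x) = a * x \<and>
     (\<lambda>n. root n (norm (a ^ n - x * a ^ (n + 1)))) \<longlonglongrightarrow> 0"

definition has_gcore_EP_inverse :: "'a::complex_banach_star_algebra \<Rightarrow> bool" where
  "has_gcore_EP_inverse a \<longleftrightarrow> (\<exists>x. is_gcore_EP_inverse a x)"

end

theory Submission
  imports Defs
begin

definition kap :: "complex \<Rightarrow> 'a::complex_banach_star_algebra" where
  "kap z = cscale z 1"

lemma cscale_eq_kap: "cscale z x = kap z * (x::'a::complex_banach_star_algebra)"
  by (simp add: kap_def cscale_left_mult)

lemma kap_comm: "kap z * x = x * (kap z :: 'a::complex_banach_star_algebra)"
  by (simp add: kap_def cscale_left_mult cscale_right_mult)

lemma kap_add: "kap (z + w) = kap z + (kap w :: 'a::complex_banach_star_algebra)"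
  by (simp add: kap_def cscale_add_left)

lemma kap_mult: "kap (z * w) = kap z * (kap w :: 'a::complex_banach_star_algebra)"
  by (simp add: kap_def cscale_left_mult cscale_cscale)

lemma kap_of_real: "kap (complex_of_real r) = (of_real r :: 'a::complex_banach_star_algebra)"
  unfolding kap_def by (subst cscale_of_real) (simp add: of_real_def)

lemma kap_one[simp]: "kap 1 = (1 :: 'a::complex_banach_star_algebra)"
  using kap_of_real[of 1] by simp

lemma kap_zero[simp]: "kap 0 = (0 :: 'a::complex_banach_star_algebra)"
  using kap_of_real[of 0] by simp

lemma kap_minus: "kap (- z) = - (kap z :: 'a::complex_banach_star_algebra)"
  using kap_add[of "-z" z, where 'a='a] by (simp add: eq_neg_iff_add_eq_0)

lemma kap_diff: "kap (z - w) = kap z - (kap w :: 'a::complex_banach_star_algebra)"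
  by (metis diff_conv_add_uminus kap_add kap_minus)

lemma kap_power: "kap (z ^ n) = (kap z :: 'a::complex_banach_star_algebra) ^ n"
  by (induction n) (simp_all add: kap_mult)

lemma kap_sum: "kap (sum f A) = (\<Sum>i\<in>A. kap (f i) :: 'a::complex_banach_star_algebra)"
  by (induction A rule: infinite_finite_induct) (simp_all add: kap_add)

lemma kap_of_nat: "kap (of_nat n) = (of_nat n :: 'a::complex_banach_star_algebra)"
  using kap_of_real[of "real n"] by simp

lemma norm_kap: "norm (kap z :: 'a::complex_banach_star_algebra) = cmod z"
  by (simp add: kap_def norm_cscale)

lemma norm_kap_mult: "norm (kap z * x :: 'a::complex_banach_star_algebra) = cmod z * norm x"
  by (simp add: cscale_eq_kap[symmetric] norm_cscale)

lemma kap_inv: "z \<noteq> 0 \<Longrightarrow> kap z * kap (inverse z) = (1 :: 'a::complex_banach_star_algebra)"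
  by (simp add: kap_mult[symmetric])

lemma kap_pow_comm: "kap z * x ^ n = x ^ n * (kap z :: 'a::complex_banach_star_algebra)"
  by (rule kap_comm)

lemma kap_mult_power: "(kap z * x) ^ n = kap (z ^ n) * (x ^ n :: 'a::complex_banach_star_algebra)"
proof (induction n)
  case 0 then show ?case by simp
next
  case (Suc n)
  have "(kap z * x) ^ Suc n = kap (z ^ n) * x ^ n * (kap z * x)" by (simp only: Suc power_Suc2)
  also have "\<dots> = kap (z ^ n) * kap z * (x ^ n * x)"
  proof -
    have "x^n * (kap z * x) = kap z * (x^n * x)" by (metis kap_comm mult.assoc)
    then show ?thesis by (simp add: mult.assoc)
  qed
  also have "\<dots> = kap (z ^ Suc n) * x ^ Suc n" by (simp only: kap_mult power_Suc2)
  finally show ?case .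
qed

lemma invol_one[simp]: "invol (1::'a::complex_banach_star_algebra) = 1"
proof -
  have "invol (invol (1::'a) * 1) = invol 1 * invol (invol 1)" by (rule invol_mult)
  then show ?thesis by (simp add: invol_invol)
qed

lemma invol_zero[simp]: "invol (0::'a::complex_banach_star_algebra) = 0"
  using invol_add[of "0::'a" 0] by simp

lemma invol_minus: "invol (- x) = - invol (x::'a::complex_banach_star_algebra)"
  using invol_add[of "-x" x] by (simp add: eq_neg_iff_add_eq_0)

lemma invol_diff: "invol (x - y) = invol x - invol (y::'a::complex_banach_star_algebra)"
  using invol_add[of x "-y"] invol_minus[of y] by simp

definition ainv :: "'a::complex_banach_star_algebra \<Rightarrow> 'a" where
  "ainv u = (SOME v. u * v = 1 \<and> v * u = 1)"

lemma ainv: "invertible_el u \<Longrightarrow> u * ainv u = 1 \<and> ainv u * u = 1"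
  unfolding ainv_def invertible_el_def by (rule someI_ex)

lemma invertibleI: "u * v = 1 \<Longrightarrow> v * u = 1 \<Longrightarrow> invertible_el u"
  unfolding invertible_el_def by blast

lemma inv_comm:
  fixes u r x :: "'a::complex_banach_star_algebra"
  assumes "u * r = 1" "r * u = 1" "u * x = x * u"
  shows "r * x = x * r"
proof -
  have "r * x = r * x * (u * r)" by (simp add: assms)
  also have "\<dots> = r * (x * u) * r" by (simp add: mult.assoc)
  also have "\<dots> = r * (u * x) * r" by (simp add: assms)
  also have "\<dots> = (r * u) * x * r" by (simp add: mult.assoc)
  finally show ?thesis by (simp add: assms)
qed

definition decay :: "(nat \<Rightarrow> 'a::real_normed_vector) \<Rightarrow> bool" where
  "decay s \<longleftrightarrow> (\<forall>\<epsilon>>0. \<exists>C. \<forall>k. norm (s k) \<le> C * \<epsilon> ^ k)"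

lemma decay_C_nonneg: "\<forall>k. norm (s k) \<le> C * \<epsilon> ^ k \<Longrightarrow> 0 \<le> C"
  using norm_ge_zero[of "s 0"] by (metis order.trans mult.right_neutral power_0)

lemma decay_small:
  assumes d: "\<delta> > 0" and h: "\<And>\<epsilon>. 0 < \<epsilon> \<Longrightarrow> \<epsilon> \<le> \<delta> \<Longrightarrow> \<exists>C. \<forall>k. norm (s k) \<le> C * \<epsilon> ^ k"
  shows "decay s"
  unfolding decay_def
proof (intro allI impI)
  fix \<epsilon> :: real assume e: "\<epsilon> > 0"
  obtain C where C: "\<forall>k. norm (s k) \<le> C * (min \<epsilon> \<delta>) ^ k" using h[of "min \<epsilon> \<delta>"] d e by auto
  have C0: "0 \<le> C" using decay_C_nonneg[OF C] .
  have "norm (s k) \<le> C * \<epsilon> ^ k" for k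
  proof -
    have "(min \<epsilon> \<delta>) ^ k \<le> \<epsilon> ^ k" using e d by (intro power_mono) auto
    then have "C * (min \<epsilon> \<delta>) ^ k \<le> C * \<epsilon> ^ k" using C0 by (rule mult_left_mono)
    then show ?thesis using C by (meson order.trans)
  qed
  then show "\<exists>C. \<forall>k. norm (s k) \<le> C * \<epsilon> ^ k" by blast
qed

lemma ev_decay:
  assumes "\<And>\<epsilon>. \<epsilon> > 0 \<Longrightarrow> eventually (\<lambda>k. norm (s k) \<le> \<epsilon> ^ k) sequentially"
  shows "decay s"
  unfolding decay_def
proof (intro allI impI)
  fix \<epsilon> :: real assume e: "\<epsilon> > 0"
  from assms[OF e] obtain N where N: "\<And>k. k \<ge> N \<Longrightarrow> norm (s k) \<le> \<epsilon> ^ k"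
    by (auto simp: eventually_sequentially)
  define C where "C = 1 + (\<Sum>k<N. norm (s k) / \<epsilon> ^ k)"
  have S0: "0 \<le> (\<Sum>k<N. norm (s k) / \<epsilon> ^ k)" by (intro sum_nonneg) (use e in auto)
  have "norm (s k) \<le> C * \<epsilon> ^ k" for k
  proof (cases "k < N")
    case True
    have "norm (s k) / \<epsilon> ^ k \<le> (\<Sum>k<N. norm (s k) / \<epsilon> ^ k)"
      by (rule member_le_sum) (use True e in auto)
    then have "norm (s k) / \<epsilon> ^ k \<le> C" by (simp add: C_def)
    then show ?thesis using e by (simp add: divide_le_eq)
  next
    case False
    have "1 \<le> C" using S0 by (simp add: C_def)
    then have "\<epsilon> ^ k \<le> C * \<epsilon> ^ k" using e by (simp add: mult_le_cancel_right1)
    with N[of k] False show ?thesis by (meson not_less order.trans)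
  qed
  then show "\<exists>C. \<forall>k. norm (s k) \<le> C * \<epsilon> ^ k" by blast
qed

lemma root_decay:
  assumes "(\<lambda>k. root k (norm (s k))) \<longlonglongrightarrow> 0"
  shows "decay s"
proof (rule ev_decay)
  fix \<epsilon> :: real assume e: "\<epsilon> > 0"
  have "eventually (\<lambda>k. root k (norm (s k)) < \<epsilon>) sequentially"
    using order_tendstoD(2)[OF assms e] .
  moreover have "eventually (\<lambda>k. k > 0) sequentially" by (simp add: eventually_gt_at_top)
  ultimately show "eventually (\<lambda>k. norm (s k) \<le> \<epsilon> ^ k) sequentially"
  proof eventually_elim
    case (elim k)
    have "norm (s k) = root k (norm (s k)) ^ k" using elim by (simp add: real_root_pow_pos2)
    also have "\<dots> \<le> \<epsilon> ^ k" using elim by (intro power_mono) (auto simp: real_root_ge_zero)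
    finally show ?case .
  qed
qed

lemma decay_root:
  assumes "decay s"
  shows "(\<lambda>k. root k (norm (s k))) \<longlonglongrightarrow> 0"
proof (rule order_tendstoI)
  fix e :: real assume "e < 0"
  then show "eventually (\<lambda>k. e < root k (norm (s k))) sequentially"
    by (intro always_eventually allI) (meson less_le_trans norm_ge_zero real_root_ge_zero)
next
  fix e :: real assume e: "0 < e"
  then obtain C where C: "\<forall>k. norm (s k) \<le> C * (e/2) ^ k" using assms unfolding decay_def
    by (meson half_gt_zero)
  have C0: "0 \<le> C" using decay_C_nonneg[OF C] .
  have "(\<lambda>k. root k (C+1)) \<longlonglongrightarrow> 1" by (rule LIMSEQ_root_const) (use C0 in simp)
  then have "eventually (\<lambda>k. root k (C+1) < 2) sequentially" by (rule order_tendstoD) simp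
  moreover have "eventually (\<lambda>k. k > 0) sequentially" by (simp add: eventually_gt_at_top)
  ultimately show "eventually (\<lambda>k. root k (norm (s k)) < e) sequentially"
  proof eventually_elim
    case (elim k)
    have "norm (s k) \<le> (C+1) * (e/2) ^ k"
      using C[rule_format, of k] e by (smt (verit) mult_right_mono zero_le_power half_gt_zero)
    then have "root k (norm (s k)) \<le> root k ((C+1) * (e/2) ^ k)"
      using elim by (intro real_root_le_mono) auto
    also have "\<dots> = root k (C+1) * (e/2)"
      using elim e by (simp add: real_root_mult real_root_power_cancel)
    also have "\<dots> < 2 * (e/2)" using elim e by (intro mult_strict_right_mono) auto
    finally show ?case by simp
  qed
qed

lemma decay_bound:
  assumes "decay s" "0 \<le> K" "\<And>k. norm (t k) \<le> K * norm (s k)"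
  shows "decay t"
  unfolding decay_def
proof (intro allI impI)
  fix \<epsilon> :: real assume "\<epsilon> > 0"
  then obtain C where C: "\<forall>k. norm (s k) \<le> C * \<epsilon> ^ k" using assms(1) unfolding decay_def by blast
  have "norm (t k) \<le> (K * C) * \<epsilon> ^ k" for k
  proof -
    have "K * norm (s k) \<le> K * (C * \<epsilon> ^ k)" using C assms(2) by (intro mult_left_mono) auto
    then show ?thesis using assms(3)[of k] by (simp add: mult.assoc)
  qed
  then show "\<exists>C. \<forall>k. norm (t k) \<le> C * \<epsilon> ^ k" by blast
qed

lemma decay_shift:
  assumes "decay (\<lambda>k. s (Suc k))"
  shows "decay s"
  unfolding decay_def
proof (intro allI impI)
  fix \<epsilon> :: real assume e: "\<epsilon> > 0"
  then obtain C where C: "\<forall>k. norm (s (Suc k)) \<le> C * \<epsilon> ^ k" using assms unfolding decay_def by blast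
  have C0: "0 \<le> C" using decay_C_nonneg[of "\<lambda>k. s (Suc k)"] C by blast
  define D where "D = norm (s 0) + C / \<epsilon>"
  have "norm (s k) \<le> D * \<epsilon> ^ k" for k
  proof (cases k)
    case 0 then show ?thesis using C0 e by (simp add: D_def)
  next
    case (Suc j)
    have "norm (s k) \<le> C * \<epsilon> ^ j" using C Suc by simp
    also have "\<dots> = (C / \<epsilon>) * \<epsilon> ^ k" using e Suc by simp
    also have "\<dots> \<le> D * \<epsilon> ^ k" using e by (intro mult_right_mono) (auto simp: D_def)
    finally show ?thesis .
  qed
  then show "\<exists>C. \<forall>k. norm (s k) \<le> C * \<epsilon> ^ k" by blast
qed

lemma decay_zero:
  assumes "decay s" "0 \<le> B" "0 \<le> K" "\<And>k. norm c \<le> K * B ^ k * norm (s k)"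
  shows "c = 0"
proof -
  define \<epsilon> where "\<epsilon> = 1 / (2 * B + 2)"
  have e: "\<epsilon> > 0" using assms(2) by (simp add: \<epsilon>_def)
  have Be: "B * \<epsilon> < 1" "0 \<le> B * \<epsilon>" using assms(2) by (auto simp: \<epsilon>_def field_simps)
  obtain C where C: "\<forall>k. norm (s k) \<le> C * \<epsilon> ^ k" using assms(1) e unfolding decay_def by blast
  have "norm c \<le> (K * C) * (B * \<epsilon>) ^ k" for k
  proof -
    have "K * B ^ k * norm (s k) \<le> K * B ^ k * (C * \<epsilon> ^ k)"
      using C assms(2,3) by (intro mult_left_mono) auto
    then show ?thesis using assms(4)[of k] by (simp add: power_mult_distrib mult_ac)
  qed
  moreover have "(\<lambda>k. (K * C) * (B * \<epsilon>) ^ k) \<longlonglongrightarrow> (K * C) * 0"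
    by (intro tendsto_mult tendsto_const LIMSEQ_power_zero) (use Be in auto)
  ultimately have "norm c \<le> 0"
    using LIMSEQ_le_const[of "\<lambda>k. (K * C) * (B * \<epsilon>) ^ k" "(K*C)*0" "norm c"] by auto
  then show ?thesis by simp
qed

lemma geom_ring:
  fixes s :: "'a::ring_1"
  shows "(1 - s) * (\<Sum>k<m. s ^ k) = 1 - s ^ m" and "(\<Sum>k<m. s ^ k) * (1 - s) = 1 - s ^ m"
proof -
  have "(1 - s) * (\<Sum>k<m. s ^ k) = (\<Sum>k<m. s ^ k - s ^ Suc k)"
    by (simp add: sum_distrib_left algebra_simps)
  also have "\<dots> = 1 - s ^ m" by (subst sum_lessThan_telescope'[of "\<lambda>k. s ^ k"]) simp
  finally show "(1 - s) * (\<Sum>k<m. s ^ k) = 1 - s ^ m" .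
  have "(\<Sum>k<m. s ^ k) * (1 - s) = (\<Sum>k<m. s ^ k - s ^ Suc k)"
    unfolding sum_distrib_right by (rule sum.cong) (simp_all add: right_diff_distrib power_Suc2 power_commutes)
  also have "\<dots> = 1 - s ^ m" by (subst sum_lessThan_telescope'[of "\<lambda>k. s ^ k"]) simp
  finally show "(\<Sum>k<m. s ^ k) * (1 - s) = 1 - s ^ m" .
qed

lemma decay_qnil:
  fixes b :: "'a::complex_banach_star_algebra"
  assumes "decay (\<lambda>k. b ^ k)"
  shows "quasinilpotent b"
  unfolding quasinilpotent_def kap_def[symmetric]
proof (intro allI impI)
  fix z :: complex assume z: "z \<noteq> 0"
  define e :: 'a where "e = kap (inverse z)"
  have ze: "kap z * e = 1" using kap_inv[OF z] by (simp add: e_def)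
  have ez: "e * kap z = 1" using ze kap_comm by metis
  have be: "b * e = e * b" by (simp add: e_def kap_comm)
  obtain C where C: "\<forall>k. norm (b ^ k) \<le> C * (cmod z / 2) ^ k"
    using assms z unfolding decay_def by (metis half_gt_zero zero_less_norm_iff)
  have C0: "0 \<le> C" using decay_C_nonneg[OF C] .
  define g where "g k = e ^ k * b ^ k" for k
  have ng: "norm (g k) \<le> C * (1/2) ^ k" for k
  proof -
    have "g k = kap (inverse z ^ k) * b ^ k" by (simp add: g_def e_def kap_power)
    then have "norm (g k) = (1 / cmod z) ^ k * norm (b ^ k)"
      by (simp add: norm_kap_mult norm_power norm_inverse divide_inverse)
    also have "\<dots> \<le> (1 / cmod z) ^ k * (C * (cmod z / 2) ^ k)"
      using C by (intro mult_left_mono) auto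
    also have "\<dots> = C * (1/2) ^ k" using z by (simp add: power_divide field_simps)
    finally show ?thesis .
  qed
  define f where "f k = e * g k" for k
  have nf: "norm (f k) \<le> norm e * (C * (1/2) ^ k)" for k
    unfolding f_def by (rule order.trans[OF norm_mult_ineq]) (intro mult_left_mono ng norm_ge_zero)
  have sf: "summable f"
    by (rule summable_comparison_test'[where N=0, OF _ nf])
       (intro summable_mult summable_geometric, simp)
  have bek: "b * e ^ n = e ^ n * b" for n using power_commuting_commutes[OF be[symmetric]] by simp
  have L: "(kap z - b) * f k = g k - g (Suc k)" for k
  proof -
    have fk: "f k = e ^ Suc k * b ^ k" by (simp add: f_def g_def mult.assoc)
    have 1: "kap z * e ^ Suc k = e ^ k" using ze by (simp add: mult.assoc[symmetric])
    have 2: "b * e ^ Suc k * b ^ k = e ^ Suc k * b ^ Suc k" by (metis bek mult.assoc power_Suc)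
    have "(kap z - b) * f k = kap z * e ^ Suc k * b ^ k - b * e ^ Suc k * b ^ k"
      unfolding fk by (simp only: left_diff_distrib mult.assoc)
    also have "\<dots> = g k - g (Suc k)" unfolding 1 2 g_def ..
    finally show ?thesis .
  qed
  have R: "f k * (kap z - b) = g k - g (Suc k)" for k
  proof -
    have fk: "f k = e ^ Suc k * b ^ k" by (simp add: f_def g_def mult.assoc)
    have "e ^ Suc k * b ^ k * kap z = e ^ Suc k * (kap z * b ^ k)" by (simp add: mult.assoc kap_comm)
    also have "\<dots> = e ^ k * (e * kap z) * b ^ k" by (simp only: power_Suc2 mult.assoc)
    finally have 3: "e ^ Suc k * b ^ k * kap z = e ^ k * b ^ k" using ez by simp
    have 4: "e ^ Suc k * b ^ k * b = e ^ Suc k * b ^ Suc k" by (simp only: power_Suc2 mult.assoc)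
    have "f k * (kap z - b) = e ^ Suc k * b ^ k * kap z - e ^ Suc k * b ^ k * b"
      unfolding fk by (simp only: right_diff_distrib)
    also have "\<dots> = g k - g (Suc k)" unfolding 3 4 g_def ..
    finally show ?thesis .
  qed
  have g0: "g \<longlonglongrightarrow> 0"
    by (rule Lim_null_comparison[OF always_eventually[OF allI[OF ng]]])
       (intro tendsto_mult_right_zero LIMSEQ_power_zero, simp)
  have PL: "(kap z - b) * (\<Sum>k<N. f k) = 1 - g N" for N
    by (simp only: sum_distrib_left L sum_lessThan_telescope') (simp add: g_def)
  have PR: "(\<Sum>k<N. f k) * (kap z - b) = 1 - g N" for N
    by (simp only: sum_distrib_right R sum_lessThan_telescope') (simp add: g_def)
  have lim1: "(\<lambda>N. 1 - g N) \<longlonglongrightarrow> 1 - 0" by (intro tendsto_intros g0)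
  have "(\<lambda>N. (kap z - b) * (\<Sum>k<N. f k)) \<longlonglongrightarrow> (kap z - b) * suminf f"
    by (intro tendsto_mult_left summable_LIMSEQ sf)
  then have A: "(kap z - b) * suminf f = 1" using lim1 unfolding PL by (simp add: LIMSEQ_unique)
  have "(\<lambda>N. (\<Sum>k<N. f k) * (kap z - b)) \<longlonglongrightarrow> suminf f * (kap z - b)"
    by (intro tendsto_mult_right summable_LIMSEQ sf)
  then have B: "suminf f * (kap z - b) = 1" using lim1 unfolding PR by (simp add: LIMSEQ_unique)
  show "invertible_el (kap z - b)" using A B by (rule invertibleI)
qed

definition res :: "'a::complex_banach_star_algebra \<Rightarrow> complex \<Rightarrow> 'a" where
  "res b l = ainv (1 - kap l * b)"

lemma qnil_inv:
  fixes b :: "'a::complex_banach_star_algebra"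
  assumes "quasinilpotent b"
  shows "invertible_el (1 - kap l * b)"
proof (cases "l = 0")
  case True then show ?thesis by (auto intro: invertibleI[of 1 1])
next
  case False
  have "invertible_el (kap (inverse l) - b)"
    using assms False unfolding quasinilpotent_def kap_def[symmetric] by simp
  then obtain v where v: "(kap (inverse l) - b) * v = 1" "v * (kap (inverse l) - b) = 1"
    unfolding invertible_el_def by blast
  have li: "kap l * kap (inverse l) = (1::'a)" "kap (inverse l) * kap l = (1::'a)"
    using kap_inv[OF False] kap_comm by (metis)+
  have eq: "1 - kap l * b = kap l * (kap (inverse l) - b)" using li by (simp add: algebra_simps)
  show ?thesis
  proof (rule invertibleI[of _ "v * kap (inverse l)"])
    have "(1 - kap l * b) * (v * kap (inverse l)) = kap l * ((kap (inverse l) - b) * v) * kap (inverse l)"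
      by (simp add: eq mult.assoc)
    then show "(1 - kap l * b) * (v * kap (inverse l)) = 1" using v li by simp
    have "v * kap (inverse l) * (1 - kap l * b) = v * (kap (inverse l) * kap l) * (kap (inverse l) - b)"
      by (simp add: eq mult.assoc)
    then show "v * kap (inverse l) * (1 - kap l * b) = 1" using v li by simp
  qed
qed

lemma res_inv:
  assumes "quasinilpotent b"
  shows "(1 - kap l * b) * res b l = 1" "res b l * (1 - kap l * b) = 1"
  using ainv[OF qnil_inv[OF assms]] unfolding res_def by auto

lemma pert:
  fixes u v w h :: "'a::complex_banach_star_algebra"
  assumes vu: "v * u = 1" and uw: "(u + h) * w = 1" and small: "norm v * norm h \<le> 1/2"
  shows "norm w \<le> 2 * norm v" "norm (w - v) \<le> 2 * norm v ^ 2 * norm h"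
proof -
  have "v = v * ((u + h) * w)" using uw by simp
  also have "\<dots> = (v * u) * w + v * h * w" by (simp add: algebra_simps)
  also have "\<dots> = w + v * h * w" using vu by simp
  finally have eq: "w - v = - (v * h * w)" by (simp add: algebra_simps)
  have n1: "norm (v * h * w) \<le> norm v * norm h * norm w"
    by (metis mult_right_mono norm_ge_zero norm_mult_ineq order.trans)
  have "norm w \<le> norm v + norm (w - v)" by (metis add.commute diff_add_cancel norm_triangle_ineq)
  also have "\<dots> \<le> norm v + norm v * norm h * norm w" using eq n1 by simp
  also have "\<dots> \<le> norm v + 1/2 * norm w" using small by (intro add_left_mono mult_right_mono) auto
  finally show w2: "norm w \<le> 2 * norm v" by simp
  have "norm (w - v) \<le> norm v * norm h * norm w" using eq n1 by simp
  also have "\<dots> \<le> norm v * norm h * (2 * norm v)" using w2 by (intro mult_left_mono) auto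
  finally show "norm (w - v) \<le> 2 * norm v ^ 2 * norm h" by (simp add: power2_eq_square mult_ac)
qed

lemma res_lip:
  fixes b :: "'a::complex_banach_star_algebra"
  assumes qn: "quasinilpotent b" and small: "cmod (l - l') * norm b * norm (res b l') \<le> 1/2"
  shows "norm (res b l) \<le> 2 * norm (res b l')"
    "norm (res b l - res b l') \<le> 2 * norm (res b l') ^ 2 * (cmod (l - l') * norm b)"
proof -
  have e: "(1 - kap l' * b) + kap (l' - l) * b = 1 - kap l * b" by (simp add: kap_diff algebra_simps)
  have nh: "norm (kap (l' - l) * b) = cmod (l - l') * norm b" by (simp add: norm_kap_mult norm_minus_commute)
  have uw: "((1 - kap l' * b) + kap (l' - l) * b) * res b l = 1" unfolding e by (rule res_inv[OF qn])
  have sm: "norm (res b l') * norm (kap (l' - l) * b) \<le> 1/2" using small nh by (simp add: mult_ac)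
  show "norm (res b l) \<le> 2 * norm (res b l')"
    using pert(1)[OF res_inv(2)[OF qn] uw sm] .
  show "norm (res b l - res b l') \<le> 2 * norm (res b l') ^ 2 * (cmod (l - l') * norm b)"
    using pert(2)[OF res_inv(2)[OF qn] uw sm] nh by simp
qed

lemma res_cont:
  fixes b :: "'a::complex_banach_star_algebra"
  assumes qn: "quasinilpotent b"
  shows "isCont (res b) l0"
proof -
  define K where "K = 2 * norm (res b l0) ^ 2 * norm b"
  define d where "d = 1 / (2 * (norm b * norm (res b l0) + 1))"
  have X: "0 \<le> norm b * norm (res b l0)" by simp
  have "0 < norm b * norm (res b l0) + 1" by (metis add_nonneg_pos mult_nonneg_nonneg norm_ge_zero zero_less_one)
  then have pos2: "0 < 2 * (norm b * norm (res b l0) + 1)" by simp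
  then have d: "d > 0" by (simp add: d_def)
  have ev: "eventually (\<lambda>l. norm (res b l - res b l0) \<le> K * cmod (l - l0)) (at l0)"
    unfolding eventually_at
  proof (intro exI[of _ d] conjI d ballI impI)
    fix l assume "l \<in> UNIV" "l \<noteq> l0 \<and> dist l l0 < d"
    then have dl: "cmod (l - l0) < d" by (simp add: dist_norm)
    have "cmod (l - l0) * (norm b * norm (res b l0)) \<le> d * (norm b * norm (res b l0))"
      using dl by (intro mult_right_mono) auto
    also have "\<dots> \<le> 1/2"
    proof -
      have "d * (norm b * norm (res b l0)) = (norm b * norm (res b l0)) / (2 * (norm b * norm (res b l0) + 1))"
        by (simp add: d_def)
      also have "\<dots> \<le> 1/2" by (rule pos_divide_le_eq[OF pos2, THEN iffD2]) simp
      finally show ?thesis .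
    qed
    finally have sm: "cmod (l - l0) * norm b * norm (res b l0) \<le> 1/2" by (simp add: mult_ac)
    show "norm (res b l - res b l0) \<le> K * cmod (l - l0)"
      using res_lip(2)[OF qn sm] by (simp add: K_def mult_ac)
  qed
  have "((\<lambda>l. K * cmod (l - l0)) \<longlongrightarrow> K * cmod (l0 - l0)) (at l0)" by (intro tendsto_intros)
  then have "((\<lambda>l. K * cmod (l - l0)) \<longlongrightarrow> 0) (at l0)" by simp
  then have "((\<lambda>l. res b l - res b l0) \<longlongrightarrow> 0) (at l0)" by (rule Lim_null_comparison[OF ev])
  then show ?thesis unfolding isCont_def by (rule LIM_zero_cancel)
qed

lemma res_bounded:
  fixes b :: "'a::complex_banach_star_algebra"
  assumes qn: "quasinilpotent b"
  shows "\<exists>M. \<forall>l. cmod l \<le> r \<longrightarrow> norm (res b l) \<le> M"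
proof -
  have "continuous_on (cball 0 r) (res b)"
    by (intro continuous_at_imp_continuous_on ballI res_cont[OF qn])
  then have "compact (res b ` cball 0 r)" by (intro compact_continuous_image compact_cball)
  then have "bounded (res b ` cball 0 r)" by (rule compact_imp_bounded)
  then obtain M where "\<forall>y\<in>res b ` cball 0 r. norm y \<le> M" unfolding bounded_iff by blast
  then show ?thesis by (intro exI[of _ M]) (auto simp: mem_cball_0)
qed

definition om :: "nat \<Rightarrow> complex" where "om m = cis (2 * pi / real m)"

lemma om_pow_m: "0 < m \<Longrightarrow> om m ^ m = 1"
  unfolding om_def Complex.DeMoivre by simp

lemma norm_om_pow: "cmod (om m ^ j) = 1"
  by (simp add: om_def norm_power)

lemma sum_om:
  assumes m: "0 < m" and k: "k < m"
  shows "(\<Sum>j<m. (om m ^ j) ^ k) = (if k = 0 then of_nat m else 0)"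
proof (cases "k = 0")
  case True then show ?thesis by simp
next
  case False
  define z where "z = om m ^ k"
  have 1: "(\<Sum>j<m. (om m ^ j) ^ k) = (\<Sum>j<m. z ^ j)"
    by (simp add: z_def power_mult[symmetric] mult.commute)
  have zm: "z ^ m = 1"
    by (simp add: z_def power_mult[symmetric] mult.commute[of k m]) (simp add: power_mult om_pow_m[OF m])
  have z1: "z \<noteq> 1"
  proof
    assume "z = 1"
    define \<theta> where "\<theta> = real k * (2 * pi / real m)"
    have "z = cis \<theta>" by (simp add: z_def om_def Complex.DeMoivre \<theta>_def)
    then have "cos \<theta> = 1" using \<open>z = 1\<close> by (metis cis.sel(1) one_complex.sel(1))
    then obtain n :: int where n: "\<theta> = real_of_int n * 2 * pi" by (auto simp: cos_one_2pi_int)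
    have "real k = real_of_int n * real m" using n m by (simp add: \<theta>_def field_simps)
    then have kn: "int k = n * int m" by (metis of_int_eq_iff of_int_mult of_int_of_nat_eq)
    show False
    proof (cases "n \<le> 0")
      case True
      then have "n * int m \<le> 0" by (simp add: mult_nonpos_nonneg)
      then show False using kn False by simp
    next
      case False
      then have "1 * int m \<le> n * int m" by (intro mult_right_mono) auto
      moreover have "int k < int m" using k by simp
      ultimately show False using kn by linarith
    qed
  qed
  show ?thesis using False unfolding 1 by (simp add: geometric_sum[OF z1] zm)
qed

definition G :: "'a::complex_banach_star_algebra \<Rightarrow> nat \<Rightarrow> complex \<Rightarrow> 'a" where
  "G b m t = kap (inverse (of_nat m)) * (\<Sum>j<m. res b (om m ^ j * t))"

lemma G_id:
  fixes b :: "'a::complex_banach_star_algebra"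
  assumes qn: "quasinilpotent b" and m: "0 < m"
  shows "G b m t * (1 - kap (t ^ m) * b ^ m) = 1"
proof -
  define c where "c = kap (t ^ m) * b ^ m"
  have each: "res b (om m ^ j * t) * (1 - c) = (\<Sum>k<m. kap ((om m ^ j) ^ k * t ^ k) * b ^ k)" for j
  proof -
    define s where "s = kap (om m ^ j * t) * b"
    have "(om m ^ j * t) ^ m = t ^ m"
      by (simp add: power_mult_distrib power_mult[symmetric] mult.commute[of j m])
         (simp add: power_mult om_pow_m[OF m])
    then have sm: "s ^ m = c" by (simp add: s_def c_def kap_mult_power)
    have "res b (om m ^ j * t) * (1 - c) = res b (om m ^ j * t) * ((1 - s) * (\<Sum>k<m. s ^ k))"
      using geom_ring(1)[of s m] sm by simp
    also have "\<dots> = (res b (om m ^ j * t) * (1 - s)) * (\<Sum>k<m. s ^ k)" by (simp add: mult.assoc)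
    also have "\<dots> = (\<Sum>k<m. s ^ k)" using res_inv(2)[OF qn] by (simp add: s_def)
    also have "\<dots> = (\<Sum>k<m. kap ((om m ^ j) ^ k * t ^ k) * b ^ k)"
      by (simp add: s_def kap_mult_power power_mult_distrib)
    finally show ?thesis .
  qed
  have "(\<Sum>j<m. res b (om m ^ j * t)) * (1 - c) = (\<Sum>j<m. \<Sum>k<m. kap ((om m ^ j) ^ k * t ^ k) * b ^ k)"
    by (simp add: sum_distrib_right each)
  also have "\<dots> = (\<Sum>k<m. \<Sum>j<m. kap ((om m ^ j) ^ k * t ^ k) * b ^ k)" by (rule sum.swap)
  also have "\<dots> = (\<Sum>k<m. kap ((\<Sum>j<m. (om m ^ j) ^ k) * t ^ k) * b ^ k)"
    by (simp add: kap_sum sum_distrib_right)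
  also have "\<dots> = (\<Sum>k<m. if k = 0 then kap (of_nat m) else 0)"
    by (rule sum.cong) (auto simp: sum_om[OF m])
  also have "\<dots> = kap (of_nat m)" using m by simp
  finally have S: "(\<Sum>j<m. res b (om m ^ j * t)) * (1 - c) = kap (of_nat m)" .
  have "G b m t * (1 - c) = kap (inverse (of_nat m)) * kap (of_nat m)"
    unfolding G_def using S by (simp add: mult.assoc)
  also have "\<dots> = 1" using m by (simp flip: kap_mult)
  finally show ?thesis by (simp add: c_def)
qed

lemma G_norm:
  fixes b :: "'a::complex_banach_star_algebra"
  assumes M: "\<And>l. cmod l \<le> r \<Longrightarrow> norm (res b l) \<le> M" and t: "cmod t \<le> r" and m: "0 < m"
  shows "norm (G b m t) \<le> M"
proof -
  have "norm (G b m t) = (1 / real m) * norm (\<Sum>j<m. res b (om m ^ j * t))"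
    by (simp add: G_def norm_kap_mult norm_inverse divide_inverse)
  also have "\<dots> \<le> (1 / real m) * (\<Sum>j<m. norm (res b (om m ^ j * t)))"
    by (intro mult_left_mono norm_sum) auto
  also have "\<dots> \<le> (1 / real m) * (real m * M)"
  proof -
    have "(\<Sum>j<m. norm (res b (om m ^ j * t))) \<le> of_nat (card {..<m}) * M"
      by (rule sum_bounded_above) (use t in \<open>auto intro!: M simp: norm_mult norm_om_pow\<close>)
    then show ?thesis by (intro mult_left_mono) auto
  qed
  also have "\<dots> = M" using m by simp
  finally show ?thesis .
qed

lemma G_lip:
  fixes b :: "'a::complex_banach_star_algebra"
  assumes L: "\<And>l l'. cmod l \<le> r \<Longrightarrow> cmod l' \<le> r \<Longrightarrow> cmod (l - l') \<le> \<delta> \<Longrightarrow>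
      norm (res b l - res b l') \<le> K * cmod (l - l')"
    and t: "cmod t \<le> r" "cmod t' \<le> r" "cmod (t - t') \<le> \<delta>" and m: "0 < m"
  shows "norm (G b m t - G b m t') \<le> K * cmod (t - t')"
proof -
  have "G b m t - G b m t' = kap (inverse (of_nat m)) * (\<Sum>j<m. res b (om m ^ j * t) - res b (om m ^ j * t'))"
    by (simp add: G_def right_diff_distrib sum_subtractf)
  then have "norm (G b m t - G b m t') = (1 / real m) * norm (\<Sum>j<m. res b (om m ^ j * t) - res b (om m ^ j * t'))"
    by (simp add: norm_kap_mult norm_inverse divide_inverse)
  also have "\<dots> \<le> (1 / real m) * (\<Sum>j<m. norm (res b (om m ^ j * t) - res b (om m ^ j * t')))"
    by (intro mult_left_mono norm_sum) auto
  also have "\<dots> \<le> (1 / real m) * (real m * (K * cmod (t - t')))"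
  proof -
    have "norm (res b (om m ^ j * t) - res b (om m ^ j * t')) \<le> K * cmod (t - t')" for j
    proof -
      have e: "om m ^ j * t - om m ^ j * t' = om m ^ j * (t - t')" by (simp add: algebra_simps)
      have n: "cmod (om m ^ j * t - om m ^ j * t') = cmod (t - t')" unfolding e by (simp add: norm_mult norm_om_pow)
      show ?thesis using L[of "om m ^ j * t" "om m ^ j * t'"] t n by (simp add: norm_mult norm_om_pow)
    qed
    then have "(\<Sum>j<m. norm (res b (om m ^ j * t) - res b (om m ^ j * t'))) \<le> of_nat (card {..<m}) * (K * cmod (t - t'))"
      by (intro sum_bounded_above)
    then show ?thesis by (intro mult_left_mono) auto
  qed
  also have "\<dots> = K * cmod (t - t')" using m by simp
  finally show ?thesis .
qed

lemma gelfand_step: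
  fixes b :: "'a::complex_banach_star_algebra"
  assumes qn: "quasinilpotent b"
    and M: "\<And>l. cmod l \<le> r \<Longrightarrow> norm (res b l) \<le> M"
    and L: "\<And>l l'. cmod l \<le> r \<Longrightarrow> cmod l' \<le> r \<Longrightarrow> cmod (l - l') \<le> \<delta> \<Longrightarrow>
      norm (res b l - res b l') \<le> K * cmod (l - l')"
    and Kd: "K * \<delta> \<le> 1/4" and K0: "0 \<le> K"
    and t: "0 \<le> t" "t < t'" "t' \<le> r" "t' - t \<le> \<delta>"
    and At: "(\<lambda>m. t ^ m * norm (b ^ m)) \<longlonglongrightarrow> 0"
    and v: "0 \<le> v" "v < t'"
  shows "(\<lambda>m. v ^ m * norm (b ^ m)) \<longlonglongrightarrow> 0"
proof -
  have "cmod 0 \<le> r" using t by simp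
  then have M0: "0 \<le> M" using M norm_ge_zero[of "res b 0"] by (meson order.trans)
  have "(\<lambda>m. M * (t ^ m * norm (b ^ m))) \<longlonglongrightarrow> M * 0" by (intro tendsto_mult tendsto_const At)
  then have ev1: "eventually (\<lambda>m. M * (t ^ m * norm (b ^ m)) < 1/4) sequentially"
    by (rule order_tendstoD(2)) simp
  have ev2: "eventually (\<lambda>m. 0 < m) sequentially" by (simp add: eventually_gt_at_top)
  have bound: "eventually (\<lambda>m. t' ^ m * norm (b ^ m) \<le> 1) sequentially"
    using ev1 ev2
  proof eventually_elim
    case (elim m)
    define c1 where "c1 = kap (complex_of_real t ^ m) * b ^ m"
    define c2 where "c2 = kap (complex_of_real t' ^ m) * b ^ m"
    define g1 where "g1 = G b m (complex_of_real t)"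
    define g2 where "g2 = G b m (complex_of_real t')"
    have i1: "g1 * (1 - c1) = 1" using G_id[OF qn elim(2)] by (simp add: g1_def c1_def)
    have i2: "g2 * (1 - c2) = 1" using G_id[OF qn elim(2)] by (simp add: g2_def c2_def)
    have nc1: "norm c1 = t ^ m * norm (b ^ m)" using t by (simp add: c1_def norm_kap_mult norm_power)
    have nc2: "norm c2 = t' ^ m * norm (b ^ m)" using t by (simp add: c2_def norm_kap_mult norm_power)
    have ct: "cmod (complex_of_real t) = t" using t by simp
    have "cmod (complex_of_real t) \<le> r" unfolding ct using t by linarith
    then have ng1: "norm g1 \<le> M" using G_norm[OF M _ elim(2)] by (simp add: g1_def)
    have h1: "g1 - g1 * c1 = 1" using i1 by (simp add: right_diff_distrib)
    have "g1 - 1 = g1 - (g1 - g1 * c1)" using h1 by simp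
    then have "g1 - 1 = g1 * c1" by simp
    then have "norm (g1 - 1) \<le> norm g1 * norm c1" by (simp add: norm_mult_ineq)
    also have "\<dots> \<le> M * norm c1" using ng1 by (intro mult_right_mono) auto
    finally have d1: "norm (g1 - 1) \<le> 1/4" using elim(1) nc1 by simp
    have cdiff: "cmod (complex_of_real t' - complex_of_real t) = t' - t" using t by (simp flip: of_real_diff)
    have "norm (g2 - g1) \<le> K * cmod (complex_of_real t' - complex_of_real t)"
      unfolding g1_def g2_def by (rule G_lip[OF L]) (use t elim cdiff in auto)
    also have "\<dots> = K * (t' - t)" using t by (simp flip: of_real_diff)
    also have "\<dots> \<le> K * \<delta>" using t K0 by (intro mult_left_mono) auto
    finally have d2: "norm (g2 - g1) \<le> 1/4" using Kd by simp
    have "g2 - 1 = (g2 - g1) + (g1 - 1)" by simp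
    then have "norm (g2 - 1) \<le> norm (g2 - g1) + norm (g1 - 1)"
      using norm_triangle_ineq[of "g2 - g1" "g1 - 1"] by simp
    then have d3: "norm (g2 - 1) \<le> 1/2" using d1 d2 by simp
    have h2: "g2 - g2 * c2 = 1" using i2 by (simp add: right_diff_distrib)
    have "g2 - 1 = g2 - (g2 - g2 * c2)" using h2 by simp
    then have e2: "g2 - 1 = g2 * c2" by simp
    have "(g2 - 1) - (g2 - 1) * c2 = (g2 - 1) - (g2 * c2 - c2)" by (simp only: left_diff_distrib mult_1_left)
    also have "\<dots> = g2 * c2 - (g2 * c2 - c2)" by (simp only: e2)
    also have "\<dots> = c2" by simp
    finally have c2eq: "(g2 - 1) - (g2 - 1) * c2 = c2" .
    have "norm ((g2 - 1) - (g2 - 1) * c2) \<le> norm (g2 - 1) + norm ((g2 - 1) * c2)"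
      by (rule norm_triangle_ineq4)
    then have "norm c2 \<le> norm (g2 - 1) + norm ((g2 - 1) * c2)" by (simp only: c2eq)
    also have "\<dots> \<le> norm (g2 - 1) + norm (g2 - 1) * norm c2" by (simp add: norm_mult_ineq)
    also have "\<dots> \<le> 1/2 + 1/2 * norm c2" using d3 by (intro add_mono mult_right_mono) auto
    finally have "norm c2 \<le> 1" by simp
    then show ?case using nc2 by simp
  qed
  have t'pos: "0 < t'" using t by simp
  have q0: "0 \<le> v / t'" using v t'pos by simp
  have q1: "v / t' < 1" using v t'pos by (simp add: divide_less_eq_1)
  have lim: "(\<lambda>m. (v / t') ^ m) \<longlonglongrightarrow> 0" by (rule LIMSEQ_power_zero) (simp only: real_norm_def abs_of_nonneg[OF q0] q1)
  have ev: "eventually (\<lambda>m. norm (v ^ m * norm (b ^ m)) \<le> (v / t') ^ m) sequentially"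
    using bound
  proof eventually_elim
    case (elim m)
    have vt: "(v / t') ^ m * t' ^ m = v ^ m" using t'pos by (simp add: power_divide)
    have "norm (v ^ m * norm (b ^ m)) = v ^ m * norm (b ^ m)" using v by simp
    also have "\<dots> = (v / t') ^ m * (t' ^ m * norm (b ^ m))" by (simp only: vt mult.assoc[symmetric])
    also have "\<dots> \<le> (v / t') ^ m * 1" by (intro mult_left_mono elim) (simp add: q0)
    finally show ?case by simp
  qed
  show ?thesis by (rule Lim_null_comparison[OF ev lim])
qed

lemma gelfand_aux:
  fixes b :: "'a::complex_banach_star_algebra"
  assumes qn: "quasinilpotent b" and u: "0 \<le> u"
  shows "(\<lambda>m. u ^ m * norm (b ^ m)) \<longlonglongrightarrow> 0"
proof -
  define r where "r = u + 1"
  obtain M where M: "\<And>l. cmod l \<le> r \<Longrightarrow> norm (res b l) \<le> M" using res_bounded[OF qn, of r] by blast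
  have "cmod 0 \<le> r" using u by (simp add: r_def)
  then have M0: "0 \<le> M" using M norm_ge_zero[of "res b 0"] by (meson order.trans)
  define K where "K = 2 * M ^ 2 * norm b"
  have K0: "0 \<le> K" by (simp add: K_def)
  define \<delta> where "\<delta> = min (1 / (4 * (K + 1))) (1 / (2 * (norm b * M + 1)))"
  have nbM: "0 \<le> norm b * M" using M0 by simp
  have p1: "0 < 1 / (4 * (K + 1))" using K0 by simp
  have p2: "0 < 1 / (2 * (norm b * M + 1))" using nbM by simp
  have d0: "\<delta> > 0" using p1 p2 by (simp add: \<delta>_def)
  have Kd: "K * \<delta> \<le> 1/4"
  proof -
    have "K * \<delta> \<le> K * (1 / (4 * (K + 1)))" using K0 by (intro mult_left_mono) (auto simp: \<delta>_def)
    also have "\<dots> \<le> 1/4" using K0 by (simp add: field_simps)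
    finally show ?thesis .
  qed
  have dbM: "\<delta> * (norm b * M) \<le> 1/2"
  proof -
    have "\<delta> * (norm b * M) \<le> (1 / (2 * (norm b * M + 1))) * (norm b * M)"
      using nbM by (intro mult_right_mono) (auto simp: \<delta>_def)
    also have "\<dots> \<le> 1/2" using nbM by (simp add: field_simps)
    finally show ?thesis .
  qed
  have L: "norm (res b l - res b l') \<le> K * cmod (l - l')"
    if l: "cmod l \<le> r" "cmod l' \<le> r" "cmod (l - l') \<le> \<delta>" for l l'
  proof -
    have "norm b * norm (res b l') \<le> norm b * M" using M[OF l(2)] by (intro mult_left_mono) auto
    then have "cmod (l - l') * (norm b * norm (res b l')) \<le> \<delta> * (norm b * M)"
      using l(3) nbM M[OF l(2)] d0 by (intro mult_mono) auto
    then have "cmod (l - l') * norm b * norm (res b l') \<le> \<delta> * (norm b * M)" by (simp add: mult.assoc)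
    then have sm: "cmod (l - l') * norm b * norm (res b l') \<le> 1/2" using dbM by simp
    have "norm (res b l - res b l') \<le> 2 * norm (res b l') ^ 2 * (cmod (l - l') * norm b)"
      by (rule res_lip(2)[OF qn sm])
    also have "\<dots> \<le> 2 * M ^ 2 * (cmod (l - l') * norm b)"
      using M[OF l(2)] by (intro mult_right_mono mult_left_mono power_mono) auto
    finally show ?thesis by (simp add: K_def mult_ac)
  qed
  define A where "A v \<longleftrightarrow> (\<lambda>m. v ^ m * norm (b ^ m)) \<longlonglongrightarrow> 0" for v :: real
  have Q: "\<forall>v. 0 \<le> v \<longrightarrow> v \<le> u \<longrightarrow> v \<le> real k * (\<delta> / 2) \<longrightarrow> A v" for k
  proof (induction k)
    case 0
    show ?case
    proof (intro allI impI)
      fix v :: real assume "0 \<le> v" "v \<le> u" "v \<le> real 0 * (\<delta> / 2)"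
      then have "v = 0" by simp
      show "A v" unfolding A_def \<open>v = 0\<close> by (rule LIMSEQ_imp_Suc) simp
    qed
  next
    case (Suc k)
    show ?case
    proof (intro allI impI)
      fix v :: real assume v: "0 \<le> v" "v \<le> u" "v \<le> real (Suc k) * (\<delta> / 2)"
      show "A v"
      proof (cases "v \<le> real k * (\<delta> / 2)")
        case True then show ?thesis using Suc v by blast
      next
        case False
        define t where "t = real k * (\<delta> / 2)"
        define t' where "t' = min (t + \<delta>) r"
        have t0: "0 \<le> t" using d0 by (simp add: t_def)
        have tv: "t < v" using False by (simp add: t_def)
        have At: "A t" using Suc t0 tv v by (simp add: t_def)
        have vt: "v \<le> t + \<delta> / 2" using v by (simp add: t_def algebra_simps)
        show "A v" unfolding A_def
        proof (rule gelfand_step[OF qn M L Kd K0])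
          show "0 \<le> t" by (rule t0)
          show "t < t'" using tv v d0 by (simp add: t'_def r_def)
          show "t' \<le> r" by (simp add: t'_def)
          show "t' - t \<le> \<delta>" by (simp add: t'_def)
          show "(\<lambda>m. t ^ m * norm (b ^ m)) \<longlonglongrightarrow> 0" using At by (simp add: A_def)
          show "0 \<le> v" by (rule v(1))
          show "v < t'" using vt v d0 by (simp add: t'_def r_def)
        qed auto
      qed
    qed
  qed
  obtain k where k: "u / (\<delta> / 2) \<le> real k" using real_arch_simple by blast
  have "u \<le> real k * (\<delta> / 2)" using k d0 by (simp add: divide_le_eq)
  then have "A u" using Q[of k] u by blast
  then show ?thesis by (simp add: A_def)
qed

lemma gelfand:
  fixes b :: "'a::complex_banach_star_algebra"
  assumes qn: "quasinilpotent b"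
  shows "decay (\<lambda>k. b ^ k)"
proof (rule ev_decay)
  fix \<epsilon> :: real assume e: "\<epsilon> > 0"
  have "(\<lambda>m. (1/\<epsilon>) ^ m * norm (b ^ m)) \<longlonglongrightarrow> 0" by (rule gelfand_aux[OF qn]) (use e in simp)
  then have "eventually (\<lambda>m. (1/\<epsilon>) ^ m * norm (b ^ m) < 1) sequentially"
    by (rule order_tendstoD(2)) simp
  then show "eventually (\<lambda>k. norm (b ^ k) \<le> \<epsilon> ^ k) sequentially"
  proof eventually_elim
    case (elim m)
    have "norm (b ^ m) = \<epsilon> ^ m * ((1/\<epsilon>) ^ m * norm (b ^ m))" using e by (simp add: power_divide)
    also have "\<dots> \<le> \<epsilon> ^ m * 1" using elim e by (intro mult_left_mono) auto
    finally show ?case by simp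
  qed
qed

lemma decay_Suc: "decay s \<Longrightarrow> decay (\<lambda>k. s (Suc k))"
  unfolding decay_def
proof (intro allI impI)
  fix \<epsilon> :: real assume d: "\<forall>\<epsilon>>0. \<exists>C. \<forall>k. norm (s k) \<le> C * \<epsilon> ^ k" and e: "\<epsilon> > 0"
  then obtain C where C: "\<forall>k. norm (s k) \<le> C * \<epsilon> ^ k" by blast
  have "norm (s (Suc k)) \<le> (C * \<epsilon>) * \<epsilon> ^ k" for k using C[rule_format, of "Suc k"] by (simp add: mult_ac)
  then show "\<exists>C. \<forall>k. norm (s (Suc k)) \<le> C * \<epsilon> ^ k" by blast
qed

lemma P1:
  fixes a x :: "'a::ring_1"
  assumes "a * x ^ 2 = x"
  shows "a * x ^ Suc (Suc k) = x ^ Suc k"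
proof -
  have "x ^ Suc (Suc k) = x ^ 2 * x ^ k" by (simp add: power_add[symmetric])
  then have "a * x ^ Suc (Suc k) = (a * x ^ 2) * x ^ k" by (simp add: mult.assoc)
  also have "\<dots> = x ^ Suc k" using assms by simp
  finally show ?thesis .
qed

lemma axx_pow:
  fixes a x :: "'a::ring_1"
  assumes ax2: "a * x ^ 2 = x"
  shows "a ^ j * x ^ (Suc m + j) = x ^ Suc m"
proof (induction j)
  case 0 then show ?case by simp
next
  case (Suc j)
  have e1: "a ^ Suc j = a ^ j * a" by (rule power_Suc2)
  have e2: "Suc m + Suc j = Suc (Suc (m + j))" by simp
  have "a ^ Suc j * x ^ (Suc m + Suc j) = a ^ j * (a * x ^ Suc (Suc (m + j)))"
    unfolding e1 e2 by (simp only: mult.assoc)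
  also have "\<dots> = a ^ j * x ^ Suc (m + j)" by (simp only: P1[OF ax2])
  also have "\<dots> = a ^ j * x ^ (Suc m + j)" by simp
  also have "\<dots> = x ^ Suc m" by (rule Suc.IH)
  finally show ?case .
qed

lemma ax_pow:
  fixes a x :: "'a::ring_1"
  assumes ax2: "a * x ^ 2 = x"
  shows "a ^ Suc k * x ^ Suc k = a * x"
proof -
  have "a ^ Suc k * x ^ Suc k = a * (a ^ k * x ^ (Suc 0 + k))" by (simp add: mult.assoc)
  also have "\<dots> = a * x" using axx_pow[OF ax2, of k 0] by simp
  finally show ?thesis .
qed

lemma pow_pa:
  fixes p a :: "'a::ring_1"
  assumes pp: "p * p = p" and pa: "p * a = p * a * p"
  shows "p * a ^ k * p = p * a ^ k" "(p * a) ^ Suc k = p * a ^ Suc k"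
proof -
  show 1: "p * a ^ k * p = p * a ^ k" for k
  proof (induction k)
    case 0 then show ?case using pp by simp
  next
    case (Suc k)
    have s1: "p * a ^ Suc k = p * a ^ k * a" by (simp only: power_Suc2 mult.assoc)
    have s2: "p * a ^ k * a = p * a ^ k * p * a" using Suc.IH by simp
    have s3: "p * a ^ k * p * a = p * a ^ k * (p * a)" by (simp only: mult.assoc)
    have s4: "p * a ^ k * (p * a) = p * a ^ k * (p * a * p)" by (simp only: pa[symmetric])
    have s5: "p * a ^ k * (p * a * p) = (p * a ^ k * p) * a * p" by (simp only: mult.assoc)
    have s6: "(p * a ^ k * p) * a * p = p * a ^ k * a * p" using Suc.IH by simp
    have s7: "p * a ^ k * a * p = p * a ^ Suc k * p" by (simp only: power_Suc2 mult.assoc)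
    show ?case by (rule sym[OF trans[OF s1 trans[OF s2 trans[OF s3 trans[OF s4 trans[OF s5 trans[OF s6 s7]]]]]]])
  qed
  show "(p * a) ^ Suc k = p * a ^ Suc k"
  proof (induction k)
    case 0 then show ?case by simp
  next
    case (Suc k)
    have t1: "(p * a) ^ Suc (Suc k) = (p * a) ^ Suc k * (p * a)" by (rule power_Suc2)
    have t2: "(p * a) ^ Suc k * (p * a) = p * a ^ Suc k * (p * a)" by (simp only: Suc.IH)
    have t3: "p * a ^ Suc k * (p * a) = (p * a ^ Suc k * p) * a" by (simp only: mult.assoc)
    have t4: "(p * a ^ Suc k * p) * a = p * a ^ Suc k * a" by (simp only: 1)
    have t5: "p * a ^ Suc k * a = p * a ^ Suc (Suc k)" by (simp only: power_Suc2[of a "Suc k"] mult.assoc)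
    show ?case by (rule trans[OF t1 trans[OF t2 trans[OF t3 trans[OF t4 t5]]]])
  qed
qed

lemma upper_inv_gen:
  fixes A X p q s :: "'a::ring_1"
  assumes pq: "p + q = 1" and AX: "A * X = q" and XAq: "X * A * q = q" and pX: "p * X = 0" and Xp: "X * p = 0"
    and ps: "p * s = s" and sp: "s * p = s" and l: "p * A * s = p - s" and r: "s * A = p - s"
  shows "(A + p) * (X + s - X * A * s) = 1" "(X + s - X * A * s) * (A + p) = 1"
proof -
  have q: "q = 1 - p" using pq by (simp add: algebra_simps)
  have "(A + p) * (X + s - X * A * s) = A * X + A * s - (A * X) * A * s + p * X + p * s - (p * X) * A * s"
    by (simp add: algebra_simps)
  also have "\<dots> = q + (A * s - q * A * s) + s" using AX pX ps by (simp add: mult.assoc)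
  also have "A * s - q * A * s = p * A * s" unfolding q by (simp add: algebra_simps)
  finally show "(A + p) * (X + s - X * A * s) = 1" using l pq by (simp add: algebra_simps)
  have "(X + s - X * A * s) * (A + p) = X * A + X * p + s * A + s * p - X * A * (s * A) - X * A * (s * p)"
    by (simp add: algebra_simps)
  also have "\<dots> = X * A + (p - s) + s - X * A * (p - s) - X * A * s" using Xp r sp by simp
  also have "\<dots> = X * A * (1 - p) + p" by (simp add: algebra_simps)
  also have "\<dots> = 1" using XAq pq q by simp
  finally show "(X + s - X * A * s) * (A + p) = 1" .
qed

lemma decay_inv_one_plus:
  fixes b :: "'a::complex_banach_star_algebra"
  assumes d: "decay (\<lambda>k. b ^ k)"
  shows "invertible_el (1 + b ^ Suc n)"
proof -
  have "decay (\<lambda>k. (b ^ Suc n) ^ k)"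
  proof (rule decay_small[of 1])
    fix \<epsilon> :: real assume e: "0 < \<epsilon>" "\<epsilon> \<le> 1"
    then obtain C where C: "\<forall>k. norm (b ^ k) \<le> C * \<epsilon> ^ k" using d unfolding decay_def by blast
    have C0: "0 \<le> C" using decay_C_nonneg[OF C] .
    have "norm ((b ^ Suc n) ^ k) \<le> C * \<epsilon> ^ k" for k
    proof -
      have pm: "(b ^ Suc n) ^ k = b ^ (Suc n * k)" by (rule power_mult[symmetric])
      have "norm ((b ^ Suc n) ^ k) \<le> C * \<epsilon> ^ (Suc n * k)" unfolding pm by (rule C[rule_format])
      also have "\<dots> \<le> C * \<epsilon> ^ k" using e C0 by (intro mult_left_mono power_decreasing) auto
      finally show ?thesis .
    qed
    then show "\<exists>C. \<forall>k. norm ((b ^ Suc n) ^ k) \<le> C * \<epsilon> ^ k" by blast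
  qed simp
  then have "quasinilpotent (b ^ Suc n)" by (rule decay_qnil)
  then have "invertible_el (kap (-1) - b ^ Suc n)"
    unfolding quasinilpotent_def kap_def[symmetric] by simp
  then obtain v where v: "(kap (-1) - b ^ Suc n) * v = 1" "v * (kap (-1) - b ^ Suc n) = 1"
    unfolding invertible_el_def by blast
  have km: "kap (-1) = (-1 :: 'a)" by (simp add: kap_minus)
  show ?thesis
  proof (rule invertibleI[of _ "- v"])
    have v1: "(-1 - b ^ Suc n) * v = 1" using v(1) unfolding km .
    have v2: "v * (-1 - b ^ Suc n) = 1" using v(2) unfolding km .
    have "(1 + b ^ Suc n) * - v = (-1 - b ^ Suc n) * v" by (simp only: algebra_simps) simp
    then show "(1 + b ^ Suc n) * - v = 1" using v1 by simp
    have "- v * (1 + b ^ Suc n) = v * (-1 - b ^ Suc n)" by (simp only: algebra_simps) simp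
    then show "- v * (1 + b ^ Suc n) = 1" using v2 by simp
  qed
qed

lemma mirror_pow:
  fixes q a :: "'a::ring_1"
  assumes qq: "q * q = q" and aq: "a * q = q * a * q"
  shows "a ^ k * q = q * a ^ k * q"
proof (induction k)
  case 0 then show ?case using qq by simp
next
  case (Suc k)
  have "a ^ Suc k * q = a * (a ^ k * q)" by (simp only: power_Suc mult.assoc)
  also have "\<dots> = a * (q * a ^ k * q)" by (simp only: Suc.IH)
  also have "\<dots> = (a * q) * a ^ k * q" by (simp only: mult.assoc)
  also have "\<dots> = (q * a * q) * a ^ k * q" by (simp only: aq)
  also have "\<dots> = q * a * (q * a ^ k * q)" by (simp only: mult.assoc)
  also have "\<dots> = q * a * (a ^ k * q)" by (simp only: Suc.IH[symmetric])
  also have "\<dots> = q * a ^ Suc k * q" by (simp only: power_Suc mult.assoc)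
  finally show ?case .
qed

lemma fwd_main:
  fixes a x :: "'a::complex_banach_star_algebra"
  assumes ax2: "a * x ^ 2 = x" and sa: "invol (a * x) = a * x"
    and dw: "decay (\<lambda>k. a ^ k - x * a ^ (k + 1))"
  shows "x * a * x = x"
    and "\<exists>p. projection p \<and> p * a = p * a * p \<and> quasinilpotent (p * a) \<and> invertible_el (a ^ Suc n + p)"
proof -
  define w where "w k = a ^ k - x * a ^ (k + 1)" for k
  have wd: "w = (\<lambda>k. a ^ k - x * a ^ (k + 1))" by (simp add: w_def fun_eq_iff)
  have dw0: "decay w" using dw by (simp only: wd)
  have dw1: "decay (\<lambda>k. w (Suc k))" by (rule decay_Suc[OF dw0])
  show xax: "x * a * x = x"
  proof -
    have eq: "x * a * x - x = - (w k * x ^ Suc k)" for k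
    proof -
      have "x * a * x = x * (a ^ Suc k * x ^ Suc k)" using ax_pow[OF ax2, of k] by (simp add: mult.assoc)
      also have "\<dots> = (x * a ^ (k + 1)) * x ^ Suc k" by (simp add: mult.assoc)
      also have "\<dots> = (a ^ k - w k) * x ^ Suc k" by (simp add: w_def)
      also have "\<dots> = a ^ k * x ^ (Suc 0 + k) - w k * x ^ Suc k" by (simp add: left_diff_distrib)
      also have "\<dots> = x - w k * x ^ Suc k" using axx_pow[OF ax2, of k 0] by simp
      finally show ?thesis by simp
    qed
    have "norm (x * a * x - x) \<le> norm x * norm x ^ k * norm (w k)" for k
    proof -
      have "norm (x * a * x - x) = norm (w k * x ^ Suc k)" using eq[of k] by simp
      also have "\<dots> \<le> norm (w k) * norm (x ^ Suc k)" by (rule norm_mult_ineq)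
      also have "\<dots> \<le> norm (w k) * norm x ^ Suc k" by (intro mult_left_mono norm_power_ineq) auto
      finally show ?thesis by (simp add: mult_ac)
    qed
    then have "x * a * x - x = 0" by (intro decay_zero[OF dw0, where B="norm x" and K="norm x"]) auto
    then show ?thesis by simp
  qed
  have aax: "a * (a * x) = a ^ Suc (Suc k) * x ^ Suc k" for k
  proof -
    have "a ^ Suc (Suc k) * x ^ Suc k = a * (a * (a ^ k * x ^ (Suc 0 + k)))" by (simp add: mult.assoc)
    also have "\<dots> = a * (a * x)" using axx_pow[OF ax2, of k 0] by simp
    finally show ?thesis by simp
  qed
  have wS: "a ^ Suc (Suc k) - a * x * a ^ Suc (Suc k) = a * w (Suc k)" for k
  proof -
    have "a * w (Suc k) = a * a ^ Suc k - a * (x * a ^ (Suc k + 1))" by (simp add: w_def right_diff_distrib)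
    also have "\<dots> = a ^ Suc (Suc k) - a * x * a ^ Suc (Suc k)" by (simp add: mult.assoc)
    finally show ?thesis by simp
  qed
  define p where "p = 1 - a * x"
  have F3: "p * (a * (a * x)) = 0"
  proof -
    have eq: "p * (a * (a * x)) = a * w (Suc k) * x ^ Suc k" for k
    proof -
      have "p * (a * (a * x)) = (1 - a * x) * a ^ Suc (Suc k) * x ^ Suc k"
        by (simp only: p_def aax[of k] mult.assoc)
      also have "\<dots> = (a ^ Suc (Suc k) - a * x * a ^ Suc (Suc k)) * x ^ Suc k"
        by (simp only: left_diff_distrib mult_1_left)
      also have "\<dots> = a * w (Suc k) * x ^ Suc k" by (simp only: wS)
      finally show ?thesis .
    qed
    have "norm (p * (a * (a * x))) \<le> (norm a * norm x) * norm x ^ k * norm (w (Suc k))" for k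
    proof -
      have "norm (p * (a * (a * x))) \<le> norm (a * w (Suc k)) * norm (x ^ Suc k)"
        unfolding eq[of k] by (rule norm_mult_ineq)
      also have "\<dots> \<le> (norm a * norm (w (Suc k))) * norm x ^ Suc k"
        by (intro mult_mono norm_mult_ineq norm_power_ineq) auto
      finally show ?thesis by (simp add: mult_ac)
    qed
    then show ?thesis by (intro decay_zero[OF dw1, where B="norm x" and K="norm a * norm x"]) auto
  qed
  have qq: "a * x * (a * x) = a * x" using xax by (simp add: mult.assoc)
  have pp: "p * p = p" unfolding p_def using qq by (simp add: algebra_simps)
  have proj: "projection p" unfolding projection_def using pp sa by (simp add: p_def invol_diff)
  have pap: "p * a = p * a * p"
  proof -
    have "p * a * p = p * a * (1 - a * x)" by (simp only: p_def)
    also have "\<dots> = p * a - p * (a * (a * x))" by (simp add: right_diff_distrib mult.assoc)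
    finally show ?thesis using F3 by simp
  qed
  have paS: "(p * a) ^ Suc k = a * w k" for k
  proof -
    have "(p * a) ^ Suc k = p * a ^ Suc k" by (rule pow_pa(2)[OF pp pap])
    also have "\<dots> = a ^ Suc k - a * x * a ^ Suc k" by (simp add: p_def left_diff_distrib)
    also have "\<dots> = a * w k" by (simp add: w_def right_diff_distrib mult.assoc)
    finally show ?thesis .
  qed
  have dpa: "decay (\<lambda>k. (p * a) ^ k)"
  proof (rule decay_shift)
    show "decay (\<lambda>k. (p * a) ^ Suc k)"
    proof (rule decay_bound[OF dw0, of "norm a"])
      show "0 \<le> norm a" by simp
      fix k show "norm ((p * a) ^ Suc k) \<le> norm a * norm (w k)" unfolding paS by (rule norm_mult_ineq)
    qed
  qed
  have qpa: "quasinilpotent (p * a)" by (rule decay_qnil[OF dpa])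
  have F7: "x * a * (a * x) = a * x"
  proof -
    have eq: "x * a * (a * x) - a * x = - (w (Suc k) * x ^ Suc k)" for k
    proof -
      have "x * a * (a * x) = (x * a ^ (Suc k + 1)) * x ^ Suc k" by (simp only: aax[of k] mult.assoc) simp
      also have "\<dots> = (a ^ Suc k - w (Suc k)) * x ^ Suc k" by (simp add: w_def)
      also have "\<dots> = a ^ Suc k * x ^ Suc k - w (Suc k) * x ^ Suc k" by (simp add: left_diff_distrib)
      also have "\<dots> = a * x - w (Suc k) * x ^ Suc k" using ax_pow[OF ax2, of k] by simp
      finally show ?thesis by simp
    qed
    have "norm (x * a * (a * x) - a * x) \<le> norm x * norm x ^ k * norm (w (Suc k))" for k
    proof -
      have "norm (x * a * (a * x) - a * x) = norm (w (Suc k) * x ^ Suc k)" using eq[of k] by simp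
      also have "\<dots> \<le> norm (w (Suc k)) * norm (x ^ Suc k)" by (rule norm_mult_ineq)
      also have "\<dots> \<le> norm (w (Suc k)) * norm x ^ Suc k" by (intro mult_left_mono norm_power_ineq) auto
      finally show ?thesis by (simp add: mult_ac)
    qed
    then have "x * a * (a * x) - a * x = 0" by (intro decay_zero[OF dw1, where B="norm x" and K="norm x"]) auto
    then show ?thesis by simp
  qed
  define q where "q = a * x"
  have pq: "p + q = 1" by (simp add: p_def q_def)
  have qq': "q * q = q" using qq by (simp add: q_def)
  have aq: "a * q = q * a * q"
  proof -
    have "a * q = (p + q) * a * q" using pq by simp
    also have "\<dots> = p * (a * (a * x)) + q * a * q" by (simp add: distrib_right q_def mult.assoc)
    finally show ?thesis using F3 by simp
  qed
  have xaq: "x * a * q = q" using F7 by (simp add: q_def)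
  have XAq: "x ^ k * a ^ k * q = q" for k
  proof (induction k)
    case 0 then show ?case by simp
  next
    case (Suc k)
    have e1: "x ^ Suc k = x ^ k * x" by (rule power_Suc2)
    have e2: "a ^ Suc k = a * a ^ k" by (rule power_Suc)
    have m: "a ^ k * q = q * a ^ k * q" by (rule mirror_pow[OF qq' aq])
    have "x ^ Suc k * a ^ Suc k * q = x ^ k * (x * a * (a ^ k * q))" unfolding e1 e2 by (simp only: mult.assoc)
    also have "\<dots> = x ^ k * (x * a * (q * a ^ k * q))" by (simp only: m)
    also have "\<dots> = x ^ k * ((x * a * q) * a ^ k * q)" by (simp only: mult.assoc)
    also have "\<dots> = x ^ k * (q * a ^ k * q)" by (simp only: xaq)
    also have "\<dots> = x ^ k * (a ^ k * q)" by (simp only: m[symmetric])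
    also have "\<dots> = q" using Suc.IH by (simp add: mult.assoc)
    finally show ?case .
  qed
  have px: "p * x = 0" using ax2 by (simp add: p_def left_diff_distrib power2_eq_square mult.assoc)
  have xp: "x * p = 0" using xax by (simp add: p_def right_diff_distrib mult.assoc)
  have pX: "p * x ^ Suc n = 0" by (simp add: px mult.assoc[symmetric])
  have "x ^ Suc n * p = x ^ n * (x * p)" by (simp only: power_Suc2 mult.assoc)
  then have Xp: "x ^ Suc n * p = 0" by (simp add: xp)
  have AX: "a ^ Suc n * x ^ Suc n = q" using ax_pow[OF ax2] by (simp add: q_def)
  have pA: "(p * a) ^ Suc n = p * a ^ Suc n" by (rule pow_pa(2)[OF pp pap])
  have pAp: "p * a ^ Suc n * p = p * a ^ Suc n" by (rule pow_pa(1)[OF pp pap])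
  have "invertible_el (1 + p * a ^ Suc n)" using decay_inv_one_plus[OF dpa, of n] pA by simp
  then obtain r where r: "(1 + p * a ^ Suc n) * r = 1" "r * (1 + p * a ^ Suc n) = 1"
    unfolding invertible_el_def by blast
  have pc: "(1 + p * a ^ Suc n) * p = p * (1 + p * a ^ Suc n)"
  proof -
    have "(1 + p * a ^ Suc n) * p = p + p * a ^ Suc n * p" by (simp add: distrib_right)
    also have "\<dots> = p + p * a ^ Suc n" by (simp only: pAp)
    also have "\<dots> = p * (1 + p * a ^ Suc n)" by (simp add: distrib_left mult.assoc[symmetric] pp)
    finally show ?thesis .
  qed
  have rp: "r * p = p * r" by (rule inv_comm[OF r pc])
  define s where "s = p * r"
  have ps: "p * s = s" by (simp add: s_def pp mult.assoc[symmetric])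
  have sp: "s * p = s" by (simp only: s_def mult.assoc rp) (simp only: mult.assoc[symmetric] pp)
  have h1: "p * a ^ Suc n * s = p * a ^ Suc n * r" by (simp only: s_def mult.assoc[symmetric] pAp)
  have h2: "p = p * r + p * a ^ Suc n * r"
  proof -
    have "p = p * ((1 + p * a ^ Suc n) * r)" using r(1) by simp
    also have "\<dots> = p * r + p * a ^ Suc n * r"
      by (simp add: distrib_left distrib_right mult.assoc[symmetric] pp)
    finally show ?thesis .
  qed
  have hh: "p * a ^ Suc n * r = p - p * r" using h2 by (metis add_diff_cancel_left')
  have l: "p * a ^ Suc n * s = p - s" by (simp only: h1 hh) (simp only: s_def)
  have h3: "r * (p * a ^ Suc n * p) = s * a ^ Suc n" by (simp only: pAp s_def mult.assoc[symmetric] rp)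
  have rr: "s * a ^ Suc n = p - s"
  proof -
    have "p = (r * (1 + p * a ^ Suc n)) * p" using r(2) by simp
    also have "\<dots> = r * p + r * (p * a ^ Suc n * p)" by (simp add: distrib_left distrib_right mult.assoc)
    also have "\<dots> = s + s * a ^ Suc n" by (simp only: h3 rp s_def)
    finally show ?thesis by (simp add: algebra_simps)
  qed
  note U = upper_inv_gen[OF pq AX XAq[of "Suc n"] pX Xp ps sp l rr]
  have inv: "invertible_el (a ^ Suc n + p)" by (rule invertibleI[OF U])
  show "\<exists>p. projection p \<and> p * a = p * a * p \<and> quasinilpotent (p * a) \<and> invertible_el (a ^ Suc n + p)"
    using proj pap qpa inv by blast
qed

lemma rev_main:
  fixes a p :: "'a::complex_banach_star_algebra"
  assumes proj: "projection p" and pap: "p * a = p * a * p" and qpa: "quasinilpotent (p * a)"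
    and inv: "invertible_el (a ^ Suc n + p)"
  shows "has_gcore_EP_inverse a"
proof -
  have pp: "p * p = p" and sp: "invol p = p" using proj unfolding projection_def by auto
  have dN: "decay (\<lambda>k. (p * a) ^ k)" by (rule gelfand[OF qpa])
  have pA: "(p * a) ^ Suc n = p * a ^ Suc n" by (rule pow_pa(2)[OF pp pap])
  have pAp: "p * a ^ k * p = p * a ^ k" for k by (rule pow_pa(1)[OF pp pap])
  have "invertible_el (1 + p * a ^ Suc n)" using decay_inv_one_plus[OF dN, of n] pA by simp
  then obtain r1 where r1: "r1 * (1 + p * a ^ Suc n) = 1" unfolding invertible_el_def by blast
  obtain v where v: "(a ^ Suc n + p) * v = 1" "v * (a ^ Suc n + p) = 1"
    using inv unfolding invertible_el_def by blast
  define q where "q = 1 - p"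
  have pq: "p * q = 0" "q * p = 0" "q * q = q" "p + q = 1" using pp by (simp_all add: q_def algebra_simps)
  have paq: "p * a ^ k * q = 0" for k
  proof -
    have "p * a ^ k * q = p * a ^ k - p * a ^ k * p" by (simp add: q_def right_diff_distrib)
    then show ?thesis using pAp[of k] by simp
  qed
  have e1: "a ^ Suc n * v + p * v = 1" using v(1) by (simp add: distrib_right)
  have e2: "v * a ^ Suc n + v * p = 1" using v(2) by (simp add: distrib_left)
  define Y where "Y = p * v * q"
  have Y0: "Y = 0"
  proof -
    have "p * (a ^ Suc n * v + p * v) = p" using e1 by simp
    then have "p * a ^ Suc n * v + p * v = p" by (simp add: distrib_left mult.assoc[symmetric] pp)
    then have "(p * a ^ Suc n * v + p * v) * q = 0" using pq by simp
    then have h: "p * a ^ Suc n * v * q + p * v * q = 0" by (simp add: distrib_right)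
    have "(1 + p * a ^ Suc n) * Y = p * v * q + (p * a ^ Suc n * p) * v * q"
      by (simp add: Y_def distrib_right mult.assoc pp)
    also have "\<dots> = p * v * q + p * a ^ Suc n * v * q" by (simp only: pAp)
    also have "\<dots> = 0" by (subst add.commute) (rule h)
    finally have "(1 + p * a ^ Suc n) * Y = 0" .
    then have "r1 * ((1 + p * a ^ Suc n) * Y) = 0" by simp
    then have "(r1 * (1 + p * a ^ Suc n)) * Y = 0" by (simp only: mult.assoc)
    then show ?thesis by (simp only: r1 mult_1_left)
  qed
  have vq: "v * q = q * v * q"
  proof -
    have "v * q = (p + q) * v * q" using pq by simp
    also have "\<dots> = Y + q * v * q" by (simp add: Y_def distrib_right)
    finally show ?thesis using Y0 by simp
  qed
  have qA: "q * a ^ k * q = a ^ k * q" for k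
  proof -
    have "a ^ k * q = (p + q) * a ^ k * q" using pq by simp
    also have "\<dots> = p * a ^ k * q + q * a ^ k * q" by (simp add: distrib_right)
    finally show ?thesis using paq[of k] by simp
  qed
  have aq: "q * a * q = a * q" using qA[of 1] by simp
  define z where "z = q * v * q"
  define T where "T = a * q"
  have qz: "q * z = z" by (simp add: z_def mult.assoc[symmetric] pq)
  have zq: "z * q = z" by (simp add: z_def mult.assoc pq)
  have qT: "q * T = T" by (simp add: T_def mult.assoc[symmetric] aq)
  have Tq: "T * q = T" by (simp add: T_def mult.assoc pq)
  have Tk: "T ^ Suc k = a ^ Suc k * q" for k
  proof (induction k)
    case 0 then show ?case by (simp add: T_def)
  next
    case (Suc k)
    have "T ^ Suc (Suc k) = a ^ Suc k * (q * a * q)" by (simp only: power_Suc2[of T "Suc k"] Suc) (simp add: T_def mult.assoc)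
    also have "\<dots> = a ^ Suc k * (a * q)" by (simp only: aq)
    also have "\<dots> = a ^ Suc (Suc k) * q" by (simp only: power_Suc2[of a "Suc k"] mult.assoc)
    finally show ?case .
  qed
  have qqy: "q * (q * y) = q * y" for y by (simp add: mult.assoc[symmetric] pq(3))
  have av: "a ^ Suc n * v = 1 - p * v" using e1 by (simp add: eq_diff_eq)
  have va: "v * a ^ Suc n = 1 - v * p" using e2 by (simp add: eq_diff_eq)
  have TN: "T ^ Suc n * z = q"
  proof -
    have "T ^ Suc n * z = a ^ Suc n * (q * v * q)" unfolding Tk z_def by (simp add: mult.assoc qqy)
    also have "\<dots> = a ^ Suc n * (v * q)" by (simp only: vq[symmetric])
    also have "\<dots> = (a ^ Suc n * v) * q" by (simp only: mult.assoc)
    also have "\<dots> = (1 - p * v) * q" by (simp only: av)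
    also have "\<dots> = q - Y" by (simp add: Y_def left_diff_distrib)
    finally show ?thesis using Y0 by simp
  qed
  have zTN: "z * T ^ Suc n = q"
  proof -
    have "z * T ^ Suc n = q * v * (q * a ^ Suc n * q)" unfolding Tk z_def by (simp only: mult.assoc)
    also have "\<dots> = q * v * (a ^ Suc n * q)" by (simp only: qA)
    also have "\<dots> = q * (v * a ^ Suc n) * q" by (simp only: mult.assoc)
    also have "\<dots> = q * (1 - v * p) * q" by (simp only: va)
    also have "\<dots> = q - q * v * (p * q)" by (simp add: right_diff_distrib left_diff_distrib pq mult.assoc)
    finally show ?thesis using pq by simp
  qed
  have Tz: "T * z = z * T"
  proof -
    have pc: "T ^ Suc n * T = T * T ^ Suc n" by (rule power_commutes)
    have "T * z = (z * T ^ Suc n) * T * z" by (simp only: zTN qT)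
    also have "\<dots> = z * (T ^ Suc n * T) * z" by (simp only: mult.assoc)
    also have "\<dots> = z * (T * T ^ Suc n) * z" by (simp only: pc)
    also have "\<dots> = z * T * (T ^ Suc n * z)" by (simp only: mult.assoc)
    also have "\<dots> = z * T * q" by (simp only: TN)
    also have "\<dots> = z * T" by (simp only: mult.assoc Tq)
    finally show ?thesis .
  qed
  define x where "x = z * T ^ n"
  have az: "a * z = T * z" by (simp only: T_def mult.assoc qz)
  have ax: "a * x = q"
  proof -
    have "a * x = T * z * T ^ n" by (simp add: x_def az mult.assoc[symmetric])
    also have "\<dots> = z * (T * T ^ n)" by (subst Tz) (simp only: mult.assoc)
    also have "\<dots> = q" using zTN by simp
    finally show ?thesis .
  qed
  have ax2: "a * x ^ 2 = x"
  proof -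
    have "a * x ^ 2 = (a * x) * x" by (simp add: power2_eq_square mult.assoc)
    also have "\<dots> = x" by (simp only: ax) (simp add: x_def mult.assoc[symmetric] qz)
    finally show ?thesis .
  qed
  have sa: "invol (a * x) = a * x" using sp by (simp add: ax q_def invol_diff)
  have xaq: "x * a * q = q"
  proof -
    have "x * a * q = z * (T ^ n * T)" by (simp add: x_def T_def mult.assoc)
    also have "T ^ n * T = T ^ Suc n" by (rule power_Suc2[symmetric])
    finally show ?thesis by (simp only: zTN)
  qed
  have xq0: "(1 - x * a) * q = 0" using xaq by (simp add: left_diff_distrib)
  have wq: "a ^ k - x * a ^ (k + 1) = (1 - x * a) * (p * a ^ k)" for k
  proof -
    have "a ^ k - x * a ^ (k + 1) = (1 - x * a) * a ^ k" by (simp add: left_diff_distrib mult.assoc)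
    also have "\<dots> = (1 - x * a) * ((p + q) * a ^ k)" using pq by simp
    also have "\<dots> = (1 - x * a) * (p * a ^ k) + (1 - x * a) * q * a ^ k"
      by (simp add: distrib_right distrib_left mult.assoc)
    also have "\<dots> = (1 - x * a) * (p * a ^ k)" by (simp only: xq0 mult_zero_left add_0_right)
    finally show ?thesis .
  qed
  have dpak: "decay (\<lambda>k. p * a ^ k)"
  proof (rule decay_shift)
    have "decay (\<lambda>k. (p * a) ^ Suc k)" by (rule decay_Suc[OF dN])
    then show "decay (\<lambda>k. p * a ^ Suc k)" by (simp only: pow_pa(2)[OF pp pap])
  qed
  have "decay (\<lambda>k. a ^ k - x * a ^ (k + 1))"
  proof (rule decay_bound[OF dpak, of "norm (1 - x * a)"])
    show "0 \<le> norm (1 - x * a)" by simp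
    fix k show "norm (a ^ k - x * a ^ (k + 1)) \<le> norm (1 - x * a) * norm (p * a ^ k)"
      unfolding wq by (rule norm_mult_ineq)
  qed
  then have "(\<lambda>k. root k (norm (a ^ k - x * a ^ (k + 1)))) \<longlonglongrightarrow> 0" by (rule decay_root)
  then have "is_gcore_EP_inverse a x" unfolding is_gcore_EP_inverse_def using ax2 sa by simp
  then show ?thesis unfolding has_gcore_EP_inverse_def by blast
qed

lemma half_sum: "(\<Sum>l<j. (1/2::real) ^ l) \<le> 2"
proof -
  have "(\<Sum>l<j. (1/2::real) ^ l) = 2 - 2 * (1/2) ^ j" by (induction j) (simp_all add: field_simps)
  then show ?thesis by simp
qed

lemma fwd_gd:
  fixes a x :: "'a::complex_banach_star_algebra"
  assumes ax2: "a * x ^ 2 = x" and xax: "x * a * x = x" and dw: "decay w"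
    and wdef: "\<And>k. w k = a ^ k - x * a ^ (k + 1)"
  shows "gd_invertible a"
proof -
  define \<epsilon>0 where "\<epsilon>0 = 1 / (2 * (norm x + 1))"
  have pos: "0 < 2 * (norm x + 1)" by (smt (verit) norm_ge_zero)
  then have e0: "0 < \<epsilon>0" by (simp add: \<epsilon>0_def)
  have "norm x * \<epsilon>0 = norm x / (2 * (norm x + 1))" by (simp add: \<epsilon>0_def)
  also have "\<dots> \<le> 1/2" by (rule pos_divide_le_eq[OF pos, THEN iffD2]) simp
  finally have xe: "norm x * \<epsilon>0 \<le> 1/2" .
  obtain C where C: "\<forall>k. norm (w k) \<le> C * \<epsilon>0 ^ k" using dw e0 unfolding decay_def by blast
  have C0: "0 \<le> C" using decay_C_nonneg[OF C] .
  define f where "f j = x ^ Suc j * w j" for j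
  have nf: "norm (f j) \<le> (norm x * C) * (1/2) ^ j" for j
  proof -
    have "norm (f j) \<le> norm (x ^ Suc j) * norm (w j)" unfolding f_def by (rule norm_mult_ineq)
    also have "\<dots> \<le> norm x ^ Suc j * (C * \<epsilon>0 ^ j)"
      using C by (intro mult_mono norm_power_ineq) auto
    also have "\<dots> = (norm x * C) * (norm x * \<epsilon>0) ^ j" by (simp add: power_mult_distrib mult_ac)
    also have "\<dots> \<le> (norm x * C) * (1/2) ^ j"
      using xe e0 C0 by (intro mult_left_mono power_mono) auto
    finally show ?thesis .
  qed
  have sf: "summable f"
    by (rule summable_comparison_test'[where N=0, OF _ nf]) (intro summable_mult summable_geometric, simp)
  define y where "y = x - suminf f"
  have yk: "x ^ Suc k * a ^ k = x - (\<Sum>j<k. f j)" for k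
  proof (induction k)
    case 0 then show ?case by simp
  next
    case (Suc k)
    have "x ^ Suc (Suc k) * a ^ Suc k = x ^ Suc k * (x * a ^ (k + 1))"
      by (simp only: power_Suc2[of x "Suc k"] mult.assoc) simp
    also have "\<dots> = x ^ Suc k * (a ^ k - w k)" by (simp add: wdef)
    also have "\<dots> = x ^ Suc k * a ^ k - f k" by (simp add: f_def right_diff_distrib)
    also have "\<dots> = x - (\<Sum>j<Suc k. f j)" by (simp only: Suc.IH sum.lessThan_Suc) (simp add: algebra_simps)
    finally show ?case .
  qed
  have Y: "(\<lambda>k. x ^ Suc k * a ^ k) \<longlonglongrightarrow> y"
    unfolding yk y_def by (intro tendsto_diff tendsto_const summable_LIMSEQ sf)
  have seqA: "a * (x ^ Suc (Suc k) * a ^ Suc k) = x ^ Suc k * a ^ Suc k" for k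
    by (simp only: mult.assoc[symmetric] P1[OF ax2])
  have seqB: "x ^ Suc k * a ^ Suc k = (x ^ Suc k * a ^ k) * a" for k
    by (simp only: power_Suc2[of a k] mult.assoc)
  have L1: "(\<lambda>k. a * (x ^ Suc (Suc k) * a ^ Suc k)) \<longlonglongrightarrow> a * y"
    by (intro tendsto_mult_left LIMSEQ_Suc[OF Y])
  have L2: "(\<lambda>k. (x ^ Suc k * a ^ k) * a) \<longlonglongrightarrow> y * a" by (intro tendsto_mult_right Y)
  have ay: "a * y = y * a" using L1 L2 unfolding seqA seqB by (rule LIMSEQ_unique)
  define L where "L = a * y"
  have XL: "(\<lambda>i. x ^ i * a ^ i) \<longlonglongrightarrow> L"
  proof (rule LIMSEQ_imp_Suc)
    show "(\<lambda>i. x ^ Suc i * a ^ Suc i) \<longlonglongrightarrow> L" using L1 unfolding seqA L_def .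
  qed
  have fixj: "(x ^ Suc j * a ^ j) * L = y" for j
  proof -
    have 1: "(\<lambda>m. (x ^ Suc j * a ^ j) * (x ^ (m + Suc j) * a ^ (m + Suc j))) \<longlonglongrightarrow> (x ^ Suc j * a ^ j) * L"
      by (intro tendsto_mult_left LIMSEQ_ignore_initial_segment XL)
    have 2: "(\<lambda>m. x ^ Suc (m + Suc j) * a ^ (m + Suc j)) \<longlonglongrightarrow> y"
      using LIMSEQ_ignore_initial_segment[OF Y, of "Suc j"] by simp
    have eq: "(x ^ Suc j * a ^ j) * (x ^ (m + Suc j) * a ^ (m + Suc j)) = x ^ Suc (m + Suc j) * a ^ (m + Suc j)" for m
    proof -
      have "(x ^ Suc j * a ^ j) * (x ^ (m + Suc j) * a ^ (m + Suc j)) = x ^ Suc j * (a ^ j * x ^ (Suc m + j)) * a ^ (m + Suc j)"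
        by (simp add: mult.assoc)
      also have "\<dots> = x ^ Suc j * x ^ Suc m * a ^ (m + Suc j)" by (simp only: axx_pow[OF ax2])
      also have "\<dots> = x ^ Suc (m + Suc j) * a ^ (m + Suc j)"
      proof -
        have ee: "Suc j + Suc m = Suc (m + Suc j)" by simp
        show ?thesis by (simp only: power_add[symmetric] ee)
      qed
      finally show ?thesis .
    qed
    show ?thesis using 1 2 unfolding eq by (rule LIMSEQ_unique)
  qed
  have yL: "y * L = y"
  proof -
    have "(\<lambda>j. (x ^ Suc j * a ^ j) * L) \<longlonglongrightarrow> y * L" by (intro tendsto_mult_right Y)
    then have "(\<lambda>j. y) \<longlonglongrightarrow> y * L" unfolding fixj .
    then show ?thesis by (simp add: LIMSEQ_const_iff)
  qed
  have yay: "y * a * y = y" using yL by (simp add: L_def mult.assoc)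
  have aya1: "a * (a * y) = a * (y * a)" by (simp only: ay)
  have aya: "a * y * a = a * (a * y)" unfolding aya1 by (rule mult.assoc)
  have La: "(1 - L) * a = a * (1 - L)" unfolding L_def by (simp add: left_diff_distrib right_diff_distrib aya)
  have LL: "(1 - L) * (1 - L) = 1 - L"
  proof -
    have "L * L = L" unfolding L_def using yay by (simp add: mult.assoc)
    then show ?thesis by (simp add: algebra_simps)
  qed
  have powL: "(a * (1 - L)) ^ Suc k = a ^ Suc k * (1 - L)" for k
  proof (induction k)
    case 0 then show ?case by simp
  next
    case (Suc k)
    have "(a * (1 - L)) ^ Suc (Suc k) = a ^ Suc k * ((1 - L) * a) * (1 - L)"
      by (simp only: power_Suc2[of _ "Suc k"] Suc mult.assoc)
    also have "\<dots> = a ^ Suc k * a * ((1 - L) * (1 - L))" by (simp only: La mult.assoc)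
    also have "\<dots> = a ^ Suc (Suc k) * (1 - L)" by (simp only: LL power_Suc2[of a "Suc k"])
    finally show ?case .
  qed
  have dec: "decay (\<lambda>m. a ^ m * (1 - L))"
  proof (rule decay_small[OF e0])
    fix \<epsilon> :: real assume e: "0 < \<epsilon>" "\<epsilon> \<le> \<epsilon>0"
    obtain C' where C': "\<forall>k. norm (w k) \<le> C' * \<epsilon> ^ k" using dw e unfolding decay_def by blast
    have C'0: "0 \<le> C'" using decay_C_nonneg[OF C'] .
    have xe': "norm x * \<epsilon> \<le> 1/2" using xe e by (meson mult_left_mono norm_ge_zero order.trans)
    have "norm (a ^ m * (1 - L)) \<le> (2 * C') * \<epsilon> ^ m" for m
    proof -
      have tel: "a ^ m - x ^ j * a ^ (j + m) = (\<Sum>l<j. x ^ l * w (l + m))" for j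
      proof (induction j)
        case 0 then show ?case by simp
      next
        case (Suc j)
        have "x ^ j * w (j + m) = x ^ j * a ^ (j + m) - (x ^ j * x) * a ^ (j + m + 1)"
          by (simp only: wdef right_diff_distrib mult.assoc)
        also have "\<dots> = x ^ j * a ^ (j + m) - x ^ Suc j * a ^ (Suc j + m)"
          by (simp only: power_Suc2[symmetric]) simp
        finally have "x ^ j * w (j + m) = x ^ j * a ^ (j + m) - x ^ Suc j * a ^ (Suc j + m)" .
        then show ?case using Suc by (simp add: algebra_simps)
      qed
      have bnd: "norm (a ^ m - x ^ j * a ^ (j + m)) \<le> (2 * C') * \<epsilon> ^ m" for j
      proof -
        have "norm (a ^ m - x ^ j * a ^ (j + m)) \<le> (\<Sum>l<j. norm (x ^ l * w (l + m)))"
          unfolding tel by (rule norm_sum)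
        also have "\<dots> \<le> (\<Sum>l<j. (C' * \<epsilon> ^ m) * (1/2) ^ l)"
        proof (rule sum_mono)
          fix l assume "l \<in> {..<j}"
          have "norm (x ^ l * w (l + m)) \<le> norm x ^ l * (C' * \<epsilon> ^ (l + m))"
            using C' by (intro order.trans[OF norm_mult_ineq] mult_mono norm_power_ineq) auto
          also have "\<dots> = (C' * \<epsilon> ^ m) * (norm x * \<epsilon>) ^ l" by (simp add: power_add power_mult_distrib mult_ac)
          also have "\<dots> \<le> (C' * \<epsilon> ^ m) * (1/2) ^ l"
            using C'0 e xe' by (intro mult_left_mono power_mono) auto
          finally show "norm (x ^ l * w (l + m)) \<le> (C' * \<epsilon> ^ m) * (1/2) ^ l" .
        qed
        also have "\<dots> = (C' * \<epsilon> ^ m) * (\<Sum>l<j. (1/2) ^ l)" by (simp add: sum_distrib_left)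
        also have "\<dots> \<le> (C' * \<epsilon> ^ m) * 2" using C'0 e by (intro mult_left_mono half_sum) auto
        finally show ?thesis by (simp add: mult_ac)
      qed
      have lim: "(\<lambda>j. a ^ m - a ^ m * (x ^ (j + Suc m) * a ^ (j + Suc m))) \<longlonglongrightarrow> a ^ m - a ^ m * L"
        by (intro tendsto_diff tendsto_const tendsto_mult_left LIMSEQ_ignore_initial_segment XL)
      have eqj: "a ^ m - a ^ m * (x ^ (j + Suc m) * a ^ (j + Suc m)) = a ^ m - x ^ Suc j * a ^ (Suc j + m)" for j
      proof -
        have "a ^ m * (x ^ (j + Suc m) * a ^ (j + Suc m)) = (a ^ m * x ^ (Suc j + m)) * a ^ (Suc j + m)"
          by (simp add: mult.assoc)
        also have "\<dots> = x ^ Suc j * a ^ (Suc j + m)" by (simp only: axx_pow[OF ax2])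
        finally show ?thesis by simp
      qed
      have "norm (a ^ m - a ^ m * L) \<le> (2 * C') * \<epsilon> ^ m"
      proof (rule LIMSEQ_le_const2[OF tendsto_norm[OF lim]])
        show "\<exists>N. \<forall>j\<ge>N. norm (a ^ m - a ^ m * (x ^ (j + Suc m) * a ^ (j + Suc m))) \<le> 2 * C' * \<epsilon> ^ m"
          using bnd unfolding eqj by blast
      qed
      then show ?thesis by (simp add: right_diff_distrib)
    qed
    then show "\<exists>C. \<forall>k. norm (a ^ k * (1 - L)) \<le> C * \<epsilon> ^ k" by blast
  qed
  have "decay (\<lambda>k. (a * (1 - L)) ^ k)"
  proof (rule decay_shift)
    show "decay (\<lambda>k. (a * (1 - L)) ^ Suc k)" unfolding powL by (rule decay_Suc[OF dec])
  qed
  then have "quasinilpotent (a * (1 - L))" by (rule decay_qnil)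
  moreover have "a - a * a * y = a * (1 - L)" by (simp add: L_def right_diff_distrib mult.assoc)
  ultimately have "quasinilpotent (a - a * a * y)" by simp
  then show ?thesis unfolding gd_invertible_def using yay ay by blast
qed

theorem corollary3p7:
  fixes a :: "'a::complex_banach_star_algebra" and n :: nat
  assumes "n \<ge> 1"
  shows "has_gcore_EP_inverse a \<longleftrightarrow>
    (gd_invertible a \<and>
     (\<exists>p. projection p \<and> p * a = p * a * p \<and> quasinilpotent (p * a) \<and>
          invertible_el (a ^ n + p)))"
proof -
  obtain n' where n: "n = Suc n'" using assms by (cases n) auto
  show ?thesis
  proof
    assume "has_gcore_EP_inverse a"
    then obtain x where gx: "is_gcore_EP_inverse a x" unfolding has_gcore_EP_inverse_def by blast
    have ax2: "a * x ^ 2 = x" and sa: "invol (a * x) = a * x"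
      and lim: "(\<lambda>k. root k (norm (a ^ k - x * a ^ (k + 1)))) \<longlonglongrightarrow> 0"
      using gx unfolding is_gcore_EP_inverse_def by auto
    have dw: "decay (\<lambda>k. a ^ k - x * a ^ (k + 1))" by (rule root_decay[OF lim])
    have xax: "x * a * x = x" by (rule fwd_main(1)[OF ax2 sa dw])
    have ex: "\<exists>p. projection p \<and> p * a = p * a * p \<and> quasinilpotent (p * a) \<and> invertible_el (a ^ Suc n' + p)"
      by (rule fwd_main(2)[OF ax2 sa dw])
    have "gd_invertible a" by (rule fwd_gd[OF ax2 xax dw]) simp
    then show "gd_invertible a \<and> (\<exists>p. projection p \<and> p * a = p * a * p \<and> quasinilpotent (p * a) \<and> invertible_el (a ^ n + p))"
      using ex n by simp
  next
    assume "gd_invertible a \<and> (\<exists>p. projection p \<and> p * a = p * a * p \<and> quasinilpotent (p * a) \<and> invertible_el (a ^ n + p))"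
    then obtain p where p: "projection p" "p * a = p * a * p" "quasinilpotent (p * a)" "invertible_el (a ^ Suc n' + p)"
      using n by blast
    show "has_gcore_EP_inverse a" by (rule rev_main[OF p])
  qed
qed

end
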